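(* Let $q=p^r$ be a prime power, $k=\mathbb{F}_{q^2}$, $n\ge 2$ and $V=k^{2n}$. Let $$G_n=\Big\{\begin{pmatrix} I & O\\ B & I\end{pmatrix}:\ B\in M_n(\mathbb{F}_{q^2}),\ \overline{B}=-B^T\Big\},$$ where $I,O$ are the $n\times n$ identity and zero matrices and $\overline{B}_{ij}=B_{ij}^q$. Then the action of $G_n$ on $V$ is not coregular and does not have the direct summand property.
   Context: $k[V]$ is the coordinate ring (symmetric algebra on $V^*$), graded, with $G$ acting by graded algebra automorphisms. The action of a finite group $G\le\mathrm{GL}(V)$ is coregular if $k[V]^G$ is generated by $\dim V$ algebraically independent homogeneous invariants; it has the direct summand property if there is a surjective graded $k[V]^G$-linear map $k[V]\to k[V]^G$. *)

theory Defs
  imports "HOL-Library.Poly_Mapping" "HOL-Computational_Algebra.Primes"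
begin

text \<open>The variable x_i
  (i < N) is the i-th coordinate function on V = k^N.\<close>

type_synonym 'k mpoly = "(nat \<Rightarrow>\<^sub>0 nat) \<Rightarrow>\<^sub>0 'k"

definition mvar :: "nat \<Rightarrow> 'k::comm_ring_1 mpoly" where
  "mvar i = Poly_Mapping.single (Poly_Mapping.single i 1) 1"

definition mconst :: "'k::comm_ring_1 \<Rightarrow> 'k mpoly" where
  "mconst c = Poly_Mapping.single 0 c"

definition msubst :: "(nat \<Rightarrow> 'k::comm_ring_1 mpoly) \<Rightarrow> 'k mpoly \<Rightarrow> 'k mpoly" where
  "msubst \<sigma> f = (\<Sum>m\<in>Poly_Mapping.keys f. mconst (Poly_Mapping.lookup f m) *
                      (\<Prod>i\<in>Poly_Mapping.keys m. \<sigma> i ^ Poly_Mapping.lookup m i))"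

definition polys_in :: "nat \<Rightarrow> 'k::comm_ring_1 mpoly set" where
  "polys_in N = {f. \<forall>m\<in>Poly_Mapping.keys f. Poly_Mapping.keys m \<subseteq> {..<N}}"

definition homogeneous :: "nat \<Rightarrow> 'k::comm_ring_1 mpoly \<Rightarrow> bool" where
  "homogeneous d f \<longleftrightarrow> (\<forall>m\<in>Poly_Mapping.keys f. (\<Sum>i\<in>Poly_Mapping.keys m. Poly_Mapping.lookup m i) = d)"

text \<open>Action of an N x N matrix g (entries g i j, i,j < N) on k[V]:
  f \<mapsto> f \<circ> g, i.e. x_i \<mapsto> sum_j g_ij x_j.\<close>
definition mat_act :: "nat \<Rightarrow> (nat \<Rightarrow> nat \<Rightarrow> 'k::comm_ring_1) \<Rightarrow> 'k mpoly \<Rightarrow> 'k mpoly" where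
  "mat_act N g f = msubst (\<lambda>i. \<Sum>j<N. mconst (g i j) * mvar j) f"

definition invariants :: "nat \<Rightarrow> (nat \<Rightarrow> nat \<Rightarrow> 'k::comm_ring_1) set \<Rightarrow> 'k mpoly set" where
  "invariants N G = {f \<in> polys_in N. \<forall>g\<in>G. mat_act N g f = f}"

definition coregular :: "nat \<Rightarrow> (nat \<Rightarrow> nat \<Rightarrow> 'k::comm_ring_1) set \<Rightarrow> bool" where
  "coregular N G \<longleftrightarrow>
     (\<exists>F :: nat \<Rightarrow> 'k mpoly.
        (\<forall>i<N. F i \<in> invariants N G \<and> (\<exists>d. homogeneous d (F i))) \<and>
        (\<forall>P\<in>polys_in N. msubst F P = 0 \<longrightarrow> P = 0) \<and>
        (\<forall>f\<in>invariants N G. \<exists>P\<in>polys_in N. f = msubst F P))"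

definition direct_summand_property :: "nat \<Rightarrow> (nat \<Rightarrow> nat \<Rightarrow> 'k::comm_ring_1) set \<Rightarrow> bool" where
  "direct_summand_property N G \<longleftrightarrow>
     (\<exists>\<pi> :: 'k mpoly \<Rightarrow> 'k mpoly.
        (\<forall>f\<in>polys_in N. \<pi> f \<in> invariants N G) \<and>
        (\<forall>h\<in>invariants N G. \<exists>f\<in>polys_in N. \<pi> f = h) \<and>
        (\<forall>a\<in>invariants N G. \<forall>b\<in>invariants N G. \<forall>f\<in>polys_in N. \<forall>g\<in>polys_in N.
            \<pi> (a * f + b * g) = a * \<pi> f + b * \<pi> g) \<and>
        (\<forall>d. \<forall>f\<in>polys_in N. homogeneous d f \<longrightarrow> homogeneous d (\<pi> f)))"

definition Gn :: "nat \<Rightarrow> nat \<Rightarrow> (nat \<Rightarrow> nat \<Rightarrow> 'k::comm_ring_1) set" where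
  "Gn q n = {M. \<exists>B :: nat \<Rightarrow> nat \<Rightarrow> 'k.
       (\<forall>i<n. \<forall>j<n. B i j ^ q = - B j i) \<and>
       M = (\<lambda>i j. if i = j then 1
                  else if n \<le> i \<and> i < 2 * n \<and> j < n then B (i - n) j else 0)}"

end

theory Submission imports Defs "HOL-Computational_Algebra.Polynomial" "HOL-Library.FuncSet"
begin

definition mon :: "(nat \<Rightarrow> 'k::comm_ring_1 mpoly) \<Rightarrow> (nat \<Rightarrow>\<^sub>0 nat) \<Rightarrow> 'k mpoly" where
  "mon \<sigma> m = (\<Prod>i\<in>Poly_Mapping.keys m. \<sigma> i ^ Poly_Mapping.lookup m i)"

lemma msubst_mon: "msubst \<sigma> f = (\<Sum>m\<in>Poly_Mapping.keys f. mconst (Poly_Mapping.lookup f m) * mon \<sigma> m)"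
  by (simp add: msubst_def mon_def)

lemma mconst_add: "mconst (a + b) = mconst a + mconst b"
  by (simp add: mconst_def single_add)
lemma mconst_mult: "mconst (a * b) = mconst a * mconst b"
  by (simp add: mconst_def mult_single)
lemma mconst_0[simp]: "mconst 0 = 0"
  by (simp add: mconst_def)
lemma mconst_1[simp]: "mconst 1 = 1"
  by (simp add: mconst_def)
lemma mconst_uminus: "mconst (- a) = - mconst a"
  by (simp add: mconst_def single_uminus)
lemma mconst_diff: "mconst (a - b) = mconst a - mconst b"
  by (simp add: mconst_def single_diff)
lemma mconst_power: "mconst (a ^ k) = mconst a ^ k"
  by (induction k) (simp_all add: mconst_mult)
lemma mconst_sum: "mconst (sum f A) = (\<Sum>x\<in>A. mconst (f x))"
  by (induction A rule: infinite_finite_induct) (simp_all add: mconst_add)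
lemma mconst_prod: "mconst (prod f A) = (\<Prod>x\<in>A. mconst (f x))"
  by (induction A rule: infinite_finite_induct) (simp_all add: mconst_mult)
lemma mconst_eq_iff[simp]: "mconst a = mconst b \<longleftrightarrow> a = b"
  unfolding mconst_def by (metis lookup_single_eq)
lemma mconst_eq_0_iff[simp]: "mconst a = 0 \<longleftrightarrow> a = 0"
  by (metis mconst_0 mconst_eq_iff)
lemma lookup_mconst: "Poly_Mapping.lookup (mconst c) m = (if m = 0 then c else 0)"
  by (simp add: mconst_def lookup_single)

lemma mconst_mult_single: "mconst c * Poly_Mapping.single m a = Poly_Mapping.single m (c * a)"
  by (simp add: mconst_def mult_single)

lemma poly_expand:
  "f = (\<Sum>m\<in>Poly_Mapping.keys f. Poly_Mapping.single m (Poly_Mapping.lookup f m))"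
proof (rule poly_mapping_eqI)
  fix k
  have "Poly_Mapping.lookup (\<Sum>m\<in>Poly_Mapping.keys f. Poly_Mapping.single m (Poly_Mapping.lookup f m)) k
     = (\<Sum>m\<in>Poly_Mapping.keys f. (if m = k then Poly_Mapping.lookup f m else 0))"
    by (simp add: lookup_sum lookup_single when_def eq_commute)
  also have "\<dots> = Poly_Mapping.lookup f k"
    by (simp add: sum.delta in_keys_iff)
  finally show "Poly_Mapping.lookup f k = Poly_Mapping.lookup (\<Sum>m\<in>Poly_Mapping.keys f. Poly_Mapping.single m (Poly_Mapping.lookup f m)) k" by simp
qed

lemma msubst_superset:
  assumes "finite S" "Poly_Mapping.keys f \<subseteq> S"
  shows "msubst \<sigma> f = (\<Sum>m\<in>S. mconst (Poly_Mapping.lookup f m) * mon \<sigma> m)"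
  unfolding msubst_mon
  by (rule sum.mono_neutral_left) (use assms in \<open>auto simp: in_keys_iff\<close>)

lemma msubst_add: "msubst \<sigma> (f + g) = msubst \<sigma> f + msubst \<sigma> g"
proof -
  let ?S = "Poly_Mapping.keys f \<union> Poly_Mapping.keys g"
  have fin: "finite ?S" by simp
  have "msubst \<sigma> (f + g) = (\<Sum>m\<in>?S. mconst (Poly_Mapping.lookup (f+g) m) * mon \<sigma> m)"
    by (rule msubst_superset) (use keys_add[of f g] in auto)
  also have "\<dots> = (\<Sum>m\<in>?S. mconst (Poly_Mapping.lookup f m) * mon \<sigma> m)
       + (\<Sum>m\<in>?S. mconst (Poly_Mapping.lookup g m) * mon \<sigma> m)"
    by (simp add: lookup_add mconst_add distrib_right sum.distrib)
  also have "\<dots> = msubst \<sigma> f + msubst \<sigma> g"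
    by (simp add: msubst_superset[symmetric])
  finally show ?thesis .
qed

lemma msubst_zero[simp]: "msubst \<sigma> 0 = 0"
  by (simp add: msubst_def)

lemma msubst_sum: "msubst \<sigma> (sum f A) = (\<Sum>x\<in>A. msubst \<sigma> (f x))"
  by (induction A rule: infinite_finite_induct) (simp_all add: msubst_add)

lemma msubst_single: "msubst \<sigma> (Poly_Mapping.single m c) = mconst c * mon \<sigma> m"
proof -
  have "msubst \<sigma> (Poly_Mapping.single m c) = (\<Sum>m'\<in>{m}. mconst (Poly_Mapping.lookup (Poly_Mapping.single m c) m') * mon \<sigma> m')"
    by (rule msubst_superset) auto
  then show ?thesis by simp
qed

lemma mon_superset:
  assumes "finite S" "Poly_Mapping.keys m \<subseteq> S"
  shows "mon \<sigma> m = (\<Prod>i\<in>S. \<sigma> i ^ Poly_Mapping.lookup m i)"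
  unfolding mon_def
  by (rule prod.mono_neutral_left) (use assms in \<open>auto simp: in_keys_iff\<close>)

lemma mon_add: "mon \<sigma> (a + b) = mon \<sigma> a * mon \<sigma> b"
proof -
  let ?S = "Poly_Mapping.keys a \<union> Poly_Mapping.keys b"
  have "mon \<sigma> (a + b) = (\<Prod>i\<in>?S. \<sigma> i ^ Poly_Mapping.lookup (a+b) i)"
    by (rule mon_superset) (use keys_add[of a b] in auto)
  also have "\<dots> = (\<Prod>i\<in>?S. \<sigma> i ^ Poly_Mapping.lookup a i) * (\<Prod>i\<in>?S. \<sigma> i ^ Poly_Mapping.lookup b i)"
    by (simp add: lookup_add power_add prod.distrib)
  also have "\<dots> = mon \<sigma> a * mon \<sigma> b"
    by (simp add: mon_superset[symmetric])
  finally show ?thesis .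
qed

lemma mon_zero[simp]: "mon \<sigma> 0 = 1"
  by (simp add: mon_def)

lemma mult_expand:
  "f * g = (\<Sum>m1\<in>Poly_Mapping.keys f. \<Sum>m2\<in>Poly_Mapping.keys g.
      Poly_Mapping.single (m1 + m2) (Poly_Mapping.lookup f m1 * Poly_Mapping.lookup g m2))"
  apply (subst (1) poly_expand[of f], subst (1) poly_expand[of g])
  by (simp add: sum_distrib_left sum_distrib_right mult_single) (subst sum.swap, rule refl)

lemma msubst_mult: "msubst \<sigma> (f * g) = msubst \<sigma> f * msubst \<sigma> g"
proof -
  have "msubst \<sigma> (f * g) = (\<Sum>m1\<in>Poly_Mapping.keys f. \<Sum>m2\<in>Poly_Mapping.keys g.
      mconst (Poly_Mapping.lookup f m1 * Poly_Mapping.lookup g m2) * mon \<sigma> (m1 + m2))"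
    by (subst mult_expand) (simp add: msubst_sum msubst_single)
  also have "\<dots> = (\<Sum>m1\<in>Poly_Mapping.keys f. \<Sum>m2\<in>Poly_Mapping.keys g.
      (mconst (Poly_Mapping.lookup f m1) * mon \<sigma> m1) * (mconst (Poly_Mapping.lookup g m2) * mon \<sigma> m2))"
    by (intro sum.cong refl) (simp add: mconst_mult mon_add mult.assoc mult.left_commute)
  also have "\<dots> = msubst \<sigma> f * msubst \<sigma> g"
    unfolding msubst_mon sum_product ..
  finally show ?thesis .
qed

lemma msubst_mconst[simp]: "msubst \<sigma> (mconst c) = mconst c"
  by (simp add: mconst_def msubst_single)

lemma msubst_one[simp]: "msubst \<sigma> 1 = 1"
  using msubst_mconst[of \<sigma> 1] by simp

lemma msubst_mvar[simp]: "msubst \<sigma> (mvar i) = \<sigma> i"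
  by (simp add: mvar_def msubst_single mon_def)

lemma msubst_uminus: "msubst \<sigma> (- f) = - msubst \<sigma> f"
proof -
  have "msubst \<sigma> (- f) + msubst \<sigma> f = 0" by (simp add: msubst_add[symmetric])
  then show ?thesis by (simp add: eq_neg_iff_add_eq_0)
qed

lemma msubst_diff: "msubst \<sigma> (f - g) = msubst \<sigma> f - msubst \<sigma> g"
  unfolding diff_conv_add_uminus msubst_add msubst_uminus ..

lemma msubst_power: "msubst \<sigma> (f ^ k) = msubst \<sigma> f ^ k"
  by (induction k) (simp_all add: msubst_mult)

lemma msubst_prod: "msubst \<sigma> (prod f A) = (\<Prod>x\<in>A. msubst \<sigma> (f x))"
  by (induction A rule: infinite_finite_induct) (simp_all add: msubst_mult)

lemma msubst_mon_eq: "msubst \<sigma> (mon \<tau> m) = mon (\<lambda>i. msubst \<sigma> (\<tau> i)) m"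
  by (simp add: mon_def msubst_prod msubst_power)

lemma msubst_comp: "msubst \<sigma> (msubst \<tau> f) = msubst (\<lambda>i. msubst \<sigma> (\<tau> i)) f"
  unfolding msubst_mon[of \<tau> f] msubst_sum msubst_mult msubst_mconst msubst_mon_eq
  by (simp add: msubst_mon[of _ f])

lemma msubst_cong:
  assumes "f \<in> polys_in N" "\<And>i. i < N \<Longrightarrow> \<sigma> i = \<tau> i"
  shows "msubst \<sigma> f = msubst \<tau> f"
  unfolding msubst_mon
proof (rule sum.cong[OF refl])
  fix m assume m: "m \<in> Poly_Mapping.keys f"
  then have "Poly_Mapping.keys m \<subseteq> {..<N}" using assms(1) by (auto simp: polys_in_def)
  then show "mconst (Poly_Mapping.lookup f m) * mon \<sigma> m = mconst (Poly_Mapping.lookup f m) * mon \<tau> m"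
  proof -
    have "mon \<sigma> m = mon \<tau> m" unfolding mon_def
      by (rule prod.cong[OF refl]) (use \<open>Poly_Mapping.keys m \<subseteq> {..<N}\<close> assms(2) in auto)
    then show ?thesis by simp
  qed
qed


lemma single_one_pow: "(Poly_Mapping.single (Poly_Mapping.single i (1::nat)) (1::'k::comm_ring_1)) ^ k
    = Poly_Mapping.single (Poly_Mapping.single i k) 1"
proof (induction k)
  case 0 then show ?case by simp
next
  case (Suc k) then show ?case by (simp add: mult_single single_add[symmetric] mult.commute)
qed

lemma mvar_power: "(mvar i :: 'k::comm_ring_1 mpoly) ^ k = Poly_Mapping.single (Poly_Mapping.single i k) 1"
  unfolding mvar_def by (rule single_one_pow)

lemma prod_singles: "(\<Prod>i\<in>A. Poly_Mapping.single (g i) (1::'k::comm_ring_1)) = Poly_Mapping.single (\<Sum>i\<in>A. g i) 1"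
  by (induction A rule: infinite_finite_induct) (simp_all add: mult_single)

lemma mon_mvar: "mon mvar m = (Poly_Mapping.single m 1 :: 'k::comm_ring_1 mpoly)"
proof -
  have "mon mvar m = (\<Prod>i\<in>Poly_Mapping.keys m. Poly_Mapping.single (Poly_Mapping.single i (Poly_Mapping.lookup m i)) (1::'k))"
    by (simp add: mon_def mvar_power)
  also have "\<dots> = Poly_Mapping.single (\<Sum>i\<in>Poly_Mapping.keys m. Poly_Mapping.single i (Poly_Mapping.lookup m i)) 1"
    by (rule prod_singles)
  also have "\<dots> = Poly_Mapping.single m 1"
    by (simp flip: poly_expand)
  finally show ?thesis .
qed

lemma msubst_id[simp]: "msubst mvar f = f"
proof -
  have "msubst mvar f = (\<Sum>m\<in>Poly_Mapping.keys f. Poly_Mapping.single m (Poly_Mapping.lookup f m))"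
    by (simp add: msubst_mon mon_mvar mconst_mult_single)
  also have "\<dots> = f" by (simp flip: poly_expand)
  finally show ?thesis .
qed

definition keep :: "nat set \<Rightarrow> nat \<Rightarrow> 'k::comm_ring_1 mpoly" where
  "keep K i = (if i \<in> K then mvar i else 0)"

lemma mon_keep: "mon (keep K) m = (if Poly_Mapping.keys m \<subseteq> K then Poly_Mapping.single m 1 else 0)"
proof (cases "Poly_Mapping.keys m \<subseteq> K")
  case True
  then have "mon (keep K) m = mon mvar m"
    unfolding mon_def keep_def by (intro prod.cong refl) auto
  then show ?thesis using True by (simp add: mon_mvar)
next
  case False
  then obtain i where i: "i \<in> Poly_Mapping.keys m" "i \<notin> K" by auto
  then have "keep K i ^ Poly_Mapping.lookup m i = 0"
    by (simp add: keep_def in_keys_iff zero_power)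
  then have "mon (keep K) m = 0" unfolding mon_def
    using i by (intro prod_zero) auto
  then show ?thesis using False by simp
qed

lemma msubst_keep: "msubst (keep K) f = (\<Sum>m\<in>Poly_Mapping.keys f.
    if Poly_Mapping.keys m \<subseteq> K then Poly_Mapping.single m (Poly_Mapping.lookup f m) else 0)"
  by (simp add: msubst_mon mon_keep mconst_mult_single if_distrib cong: if_cong)

lemma lookup_msubst_keep:
  "Poly_Mapping.lookup (msubst (keep K) f) m = (if Poly_Mapping.keys m \<subseteq> K then Poly_Mapping.lookup f m else 0)"
proof -
  have "Poly_Mapping.lookup (msubst (keep K) f) m = (\<Sum>m'\<in>Poly_Mapping.keys f.
     if Poly_Mapping.keys m' \<subseteq> K \<and> m' = m then Poly_Mapping.lookup f m' else 0)"
    unfolding msubst_keep lookup_sum by (intro sum.cong refl) (auto simp: lookup_single when_def)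
  also have "\<dots> = (\<Sum>m'\<in>Poly_Mapping.keys f. if m' = m then (if Poly_Mapping.keys m \<subseteq> K then Poly_Mapping.lookup f m else 0) else 0)"
    by (intro sum.cong refl) auto
  also have "\<dots> = (if Poly_Mapping.keys m \<subseteq> K then Poly_Mapping.lookup f m else 0)"
    by (simp add: sum.delta in_keys_iff)
  finally show ?thesis .
qed

lemma mvar_mult_expand:
  "mvar j * c = (\<Sum>m\<in>Poly_Mapping.keys c. Poly_Mapping.single (Poly_Mapping.single j 1 + m) (Poly_Mapping.lookup c m))"
  apply (subst (1) poly_expand[of c])
  by (simp add: mvar_def sum_distrib_left mult_single)

lemma lookup_mvar_mult1:
  "Poly_Mapping.lookup (mvar j * c) (Poly_Mapping.single j 1 + m) = Poly_Mapping.lookup c m"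
proof -
  have eq: "Poly_Mapping.single j 1 + m' = Poly_Mapping.single j 1 + m \<longleftrightarrow> m' = m" for m' :: "nat \<Rightarrow>\<^sub>0 nat"
    by (metis (no_types, lifting) add_left_imp_eq lookup_add poly_mapping_eqI)
  have "Poly_Mapping.lookup (mvar j * c) (Poly_Mapping.single j 1 + m) =
     (\<Sum>m'\<in>Poly_Mapping.keys c. if m' = m then Poly_Mapping.lookup c m' else 0)"
    by (simp add: mvar_mult_expand lookup_sum lookup_single when_def eq)
  also have "\<dots> = Poly_Mapping.lookup c m" by (simp add: sum.delta in_keys_iff)
  finally show ?thesis .
qed

lemma lookup_mvar_mult0:
  assumes "Poly_Mapping.lookup m j = 0"
  shows "Poly_Mapping.lookup (mvar j * c) m = 0"
proof -
  have "Poly_Mapping.single j 1 + m' \<noteq> m" for m' :: "nat \<Rightarrow>\<^sub>0 nat"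
    using assms by (metis add_is_0 lookup_add lookup_single_eq one_neq_zero)
  then show ?thesis by (simp add: mvar_mult_expand lookup_sum lookup_single when_def)
qed

section \<open>Degrees and homogeneity\<close>

definition mdeg :: "(nat \<Rightarrow>\<^sub>0 nat) \<Rightarrow> nat" where
  "mdeg m = (\<Sum>i\<in>Poly_Mapping.keys m. Poly_Mapping.lookup m i)"

lemma homogeneous_mdeg: "homogeneous d f \<longleftrightarrow> (\<forall>m\<in>Poly_Mapping.keys f. mdeg m = d)"
  by (simp add: homogeneous_def mdeg_def)

lemma mdeg_superset: "finite S \<Longrightarrow> Poly_Mapping.keys m \<subseteq> S \<Longrightarrow> mdeg m = (\<Sum>i\<in>S. Poly_Mapping.lookup m i)"
  unfolding mdeg_def by (rule sum.mono_neutral_left) (auto simp: in_keys_iff)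

lemma mdeg_add: "mdeg (a + b) = mdeg a + mdeg b"
proof -
  let ?S = "Poly_Mapping.keys a \<union> Poly_Mapping.keys b"
  have "mdeg (a + b) = (\<Sum>i\<in>?S. Poly_Mapping.lookup (a+b) i)"
    by (rule mdeg_superset) (use keys_add[of a b] in auto)
  also have "\<dots> = (\<Sum>i\<in>?S. Poly_Mapping.lookup a i) + (\<Sum>i\<in>?S. Poly_Mapping.lookup b i)"
    by (simp add: lookup_add sum.distrib)
  also have "\<dots> = mdeg a + mdeg b" by (simp add: mdeg_superset[symmetric])
  finally show ?thesis .
qed

lemma mdeg_zero[simp]: "mdeg 0 = 0" by (simp add: mdeg_def)
lemma mdeg_single[simp]: "mdeg (Poly_Mapping.single i k) = k" by (simp add: mdeg_def)

lemma homogeneous_0[simp]: "homogeneous d 0" by (simp add: homogeneous_def)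

lemma homogeneous_add: "homogeneous d f \<Longrightarrow> homogeneous d g \<Longrightarrow> homogeneous d (f + g)"
  using keys_add[of f g] by (auto simp: homogeneous_mdeg)

lemma homogeneous_uminus: "homogeneous d f \<Longrightarrow> homogeneous d (- f)"
  by (simp add: homogeneous_mdeg keys_minus)

lemma homogeneous_diff: "homogeneous d f \<Longrightarrow> homogeneous d g \<Longrightarrow> homogeneous d (f - g)"
  using homogeneous_add homogeneous_uminus by (metis diff_conv_add_uminus)

lemma homogeneous_sum: "(\<And>x. x \<in> A \<Longrightarrow> homogeneous d (f x)) \<Longrightarrow> homogeneous d (sum f A)"
  by (induction A rule: infinite_finite_induct) (auto intro: homogeneous_add)

lemma homogeneous_mult: "homogeneous a f \<Longrightarrow> homogeneous b g \<Longrightarrow> homogeneous (a + b) (f * g)"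
  using keys_mult[of f g] by (fastforce simp: homogeneous_mdeg mdeg_add)

lemma homogeneous_power: "homogeneous a f \<Longrightarrow> homogeneous (k * a) (f ^ k)"
proof (induction k)
  case 0 then show ?case by (simp add: homogeneous_mdeg)
next
  case (Suc k) then show ?case using homogeneous_mult[of a f "k*a" "f^k"] by (simp add: add.commute)
qed

lemma homogeneous_prod: "(\<And>x. x \<in> A \<Longrightarrow> homogeneous (d x) (f x)) \<Longrightarrow> homogeneous (\<Sum>x\<in>A. d x) (prod f A)"
proof (induction A rule: infinite_finite_induct)
  case (infinite A) then show ?case by (simp add: homogeneous_mdeg)
next
  case empty then show ?case by (simp add: homogeneous_mdeg)
next
  case (insert x F) then show ?case by (simp add: homogeneous_mult)
qed

lemma homogeneous_mconst: "homogeneous 0 (mconst c)"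
  by (simp add: homogeneous_mdeg mconst_def)

lemma homogeneous_mvar: "homogeneous 1 (mvar i)"
  by (simp add: homogeneous_mdeg mvar_def)

lemma homogeneous_mconst_mult: "homogeneous d f \<Longrightarrow> homogeneous d (mconst c * f)"
  using homogeneous_mult[OF homogeneous_mconst] by fastforce

lemma homogeneous_single: "homogeneous (mdeg m) (Poly_Mapping.single m c)"
  by (simp add: homogeneous_mdeg)

lemma homogeneous_mon:
  assumes "\<And>i. i \<in> Poly_Mapping.keys m \<Longrightarrow> homogeneous (dg i) (\<sigma> i)"
  shows "homogeneous (\<Sum>i\<in>Poly_Mapping.keys m. Poly_Mapping.lookup m i * dg i) (mon \<sigma> m)"
  unfolding mon_def by (rule homogeneous_prod) (use assms homogeneous_power in blast)

lemma homogeneous_mon_lin: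
  assumes "\<And>i. i \<in> Poly_Mapping.keys m \<Longrightarrow> homogeneous 1 (\<sigma> i)"
  shows "homogeneous (mdeg m) (mon \<sigma> m)"
  using homogeneous_mon[of m "\<lambda>_. 1" \<sigma>] assms by (simp add: mdeg_def)

definition hpart :: "nat \<Rightarrow> 'k::comm_ring_1 mpoly \<Rightarrow> 'k mpoly" where
  "hpart d f = (\<Sum>m\<in>Poly_Mapping.keys f. if mdeg m = d then Poly_Mapping.single m (Poly_Mapping.lookup f m) else 0)"

lemma lookup_hpart: "Poly_Mapping.lookup (hpart d f) m = (if mdeg m = d then Poly_Mapping.lookup f m else 0)"
proof -
  have "Poly_Mapping.lookup (hpart d f) m = (\<Sum>m'\<in>Poly_Mapping.keys f.
     if m' = m then (if mdeg m = d then Poly_Mapping.lookup f m else 0) else 0)"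
    unfolding hpart_def lookup_sum
    by (intro sum.cong refl) (auto simp: lookup_single when_def)
  also have "\<dots> = (if mdeg m = d then Poly_Mapping.lookup f m else 0)"
    by (simp add: sum.delta in_keys_iff)
  finally show ?thesis .
qed

lemma hpart_add: "hpart d (f + g) = hpart d f + hpart d g"
  by (rule poly_mapping_eqI) (simp add: lookup_hpart lookup_add)

lemma hpart_sum: "hpart d (sum f A) = (\<Sum>x\<in>A. hpart d (f x))"
  by (rule poly_mapping_eqI) (simp add: lookup_hpart lookup_sum)

lemma hpart_homogeneous: "homogeneous e f \<Longrightarrow> hpart d f = (if d = e then f else 0)"
  by (rule poly_mapping_eqI) (auto simp: lookup_hpart homogeneous_mdeg in_keys_iff)

lemma homogeneous_hpart: "homogeneous d (hpart d f)"
  by (auto simp: homogeneous_mdeg in_keys_iff lookup_hpart split: if_splits)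

lemma hpart_msubst:
  assumes "\<And>i. homogeneous 1 (\<sigma> i)"
  shows "hpart d (msubst \<sigma> f) = msubst \<sigma> (hpart d f)"
proof -
  have h: "homogeneous (mdeg m) (mconst c * mon \<sigma> m)" for m c
    by (rule homogeneous_mconst_mult, rule homogeneous_mon_lin) (use assms in auto)
  have "hpart d (msubst \<sigma> f) = (\<Sum>m\<in>Poly_Mapping.keys f. if mdeg m = d then mconst (Poly_Mapping.lookup f m) * mon \<sigma> m else 0)"
    unfolding msubst_mon hpart_sum by (intro sum.cong refl) (simp add: hpart_homogeneous[OF h])
  also have "\<dots> = msubst \<sigma> (hpart d f)"
    unfolding hpart_def msubst_sum by (intro sum.cong refl) (simp add: msubst_single)
  finally show ?thesis .
qed


section \<open>Finite field facts\<close>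

lemma frob_p:
  fixes a b :: "'a::comm_ring_1"
  assumes p: "prime p" and z: "of_nat p = (0::'a)"
  shows "(a + b) ^ p = a ^ p + b ^ p"
proof -
  have p0: "p \<noteq> 0" using p by auto
  have "(a + b) ^ p = (\<Sum>k\<le>p. of_nat (p choose k) * a ^ k * b ^ (p - k))"
    by (simp add: binomial_ring)
  also have "\<dots> = (\<Sum>k\<le>p. (if k = 0 then b ^ p else 0) + (if k = p then a ^ p else 0))"
  proof (rule sum.cong[OF refl])
    fix k assume k: "k \<in> {..p}"
    show "of_nat (p choose k) * a ^ k * b ^ (p - k) = (if k = 0 then b ^ p else 0) + (if k = p then a ^ p else 0)"
    proof (cases "k = 0 \<or> k = p")
      case True then show ?thesis using p0 by auto
    next
      case False
      then have "p dvd (p choose k)" using k p p0 by (intro dvd_choose_prime) auto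
      then obtain c where "p choose k = p * c" by auto
      then have "of_nat (p choose k) = (0::'a)" by (simp add: z)
      then show ?thesis using False by simp
    qed
  qed
  also have "\<dots> = a ^ p + b ^ p"
    by (simp add: sum.distrib sum.delta)
  finally show ?thesis .
qed

lemma frob_q:
  fixes a b :: "'a::comm_ring_1"
  assumes p: "prime p" and z: "of_nat p = (0::'a)"
  shows "(a + b) ^ (p ^ r) = a ^ (p ^ r) + b ^ (p ^ r)"
proof (induction r)
  case 0 then show ?case by simp
next
  case (Suc r)
  have "(a + b) ^ (p ^ Suc r) = ((a + b) ^ (p ^ r)) ^ p" by (simp only: power_Suc2 power_mult)
  also have "\<dots> = (a ^ (p ^ r)) ^ p + (b ^ (p ^ r)) ^ p" by (simp add: Suc frob_p[OF p z])
  also have "\<dots> = a ^ (p ^ Suc r) + b ^ (p ^ Suc r)" by (simp only: power_Suc2 power_mult)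
  finally show ?case .
qed

lemma frob_sum:
  fixes f :: "'b \<Rightarrow> 'a::comm_ring_1"
  assumes p: "prime p" and z: "of_nat p = (0::'a)"
  shows "(sum f A) ^ (p ^ r) = (\<Sum>x\<in>A. f x ^ (p ^ r))"
proof (induction A rule: infinite_finite_induct)
  case (infinite A) then show ?case using p by (simp add: zero_power prime_gt_0_nat)
next
  case empty then show ?case using p by (simp add: zero_power prime_gt_0_nat)
next
  case (insert x F) then show ?case by (simp add: frob_q[OF p z])
qed

lemma frob_uminus:
  fixes a :: "'a::comm_ring_1"
  assumes p: "prime p" and z: "of_nat p = (0::'a)"
  shows "(- a) ^ (p ^ r) = - (a ^ (p ^ r))"
proof -
  have "(- a) ^ (p ^ r) + a ^ (p ^ r) = (- a + a) ^ (p ^ r)" by (rule frob_q[OF p z, symmetric])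
  also have "\<dots> = 0" using p by (simp add: zero_power prime_gt_0_nat)
  finally show ?thesis by (simp add: eq_neg_iff_add_eq_0)
qed

lemma field_card_zero:
  assumes "finite (UNIV :: 'k::field set)"
  shows "of_nat (card (UNIV :: 'k set)) = (0::'k)"
proof -
  have "(\<Sum>x\<in>UNIV. x) = (\<Sum>x\<in>UNIV. x + (1::'k))"
    by (rule sum.reindex_bij_witness[of _ "\<lambda>x. x + 1" "\<lambda>x. x - 1"]) auto
  also have "\<dots> = (\<Sum>x\<in>UNIV. x) + of_nat (card (UNIV :: 'k set))"
    by (simp add: sum.distrib)
  finally show ?thesis by simp
qed

lemma field_pow_card:
  assumes fin: "finite (UNIV :: 'k::field set)"
  shows "(t::'k) ^ card (UNIV :: 'k set) = t"
proof (cases "t = 0")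
  case True
  have "card (UNIV :: 'k set) \<noteq> 0" using fin by simp
  then show ?thesis using True by (simp add: zero_power)
next
  case False
  let ?A = "UNIV - {0::'k}"
  have "(\<Prod>x\<in>?A. t * x) = (\<Prod>x\<in>?A. x)"
    by (rule prod.reindex_bij_witness[of _ "\<lambda>x. x / t" "\<lambda>x. t * x"]) (use False in auto)
  moreover have "(\<Prod>x\<in>?A. t * x) = t ^ card ?A * (\<Prod>x\<in>?A. x)"
    by (simp add: prod.distrib)
  moreover have "(\<Prod>x\<in>?A. x) \<noteq> 0" using fin by simp
  ultimately have "t ^ card ?A = 1" by simp
  moreover have "card ?A + 1 = card (UNIV :: 'k set)"
    using fin by (simp add: card_Diff_singleton card_gt_0_iff Suc_le_eq)
  ultimately show ?thesis by (metis power_Suc2 Suc_eq_plus1 mult_1)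
qed

lemma of_nat_mpoly: "(of_nat n :: 'k::comm_ring_1 mpoly) = mconst (of_nat n)"
  by (simp add: mconst_def)


lemma polys_in_add: "f \<in> polys_in N \<Longrightarrow> g \<in> polys_in N \<Longrightarrow> f + g \<in> polys_in N"
  using keys_add[of f g] by (auto simp: polys_in_def)

lemma polys_in_uminus: "f \<in> polys_in N \<Longrightarrow> - f \<in> polys_in N"
  by (simp add: polys_in_def keys_minus)

lemma polys_in_diff: "f \<in> polys_in N \<Longrightarrow> g \<in> polys_in N \<Longrightarrow> f - g \<in> polys_in N"
  by (metis diff_conv_add_uminus polys_in_add polys_in_uminus)

lemma polys_in_mult: "f \<in> polys_in N \<Longrightarrow> g \<in> polys_in N \<Longrightarrow> f * g \<in> polys_in N"
proof -
  assume f: "f \<in> polys_in N" and g: "g \<in> polys_in N"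
  show ?thesis unfolding polys_in_def mem_Collect_eq
  proof
    fix m assume "m \<in> Poly_Mapping.keys (f * g)"
    then obtain a b where ab: "m = a + b" "a \<in> Poly_Mapping.keys f" "b \<in> Poly_Mapping.keys g"
      using keys_mult[of f g] by blast
    have "Poly_Mapping.keys a \<subseteq> {..<N}" "Poly_Mapping.keys b \<subseteq> {..<N}"
      using f g ab by (auto simp: polys_in_def)
    then show "Poly_Mapping.keys m \<subseteq> {..<N}" using keys_add[of a b] ab(1) by blast
  qed
qed

lemma polys_in_0[simp]: "0 \<in> polys_in N" by (simp add: polys_in_def)
lemma polys_in_mconst[simp]: "mconst c \<in> polys_in N" by (simp add: polys_in_def mconst_def)
lemma polys_in_1[simp]: "1 \<in> polys_in N" using polys_in_mconst[of 1] by simp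
lemma polys_in_mvar: "i < N \<Longrightarrow> mvar i \<in> polys_in N" by (simp add: polys_in_def mvar_def)

lemma polys_in_sum: "(\<And>x. x \<in> A \<Longrightarrow> f x \<in> polys_in N) \<Longrightarrow> sum f A \<in> polys_in N"
  by (induction A rule: infinite_finite_induct) (auto intro: polys_in_add)

lemma polys_in_prod: "(\<And>x. x \<in> A \<Longrightarrow> f x \<in> polys_in N) \<Longrightarrow> prod f A \<in> polys_in N"
  by (induction A rule: infinite_finite_induct) (auto intro: polys_in_mult)

lemma polys_in_power: "f \<in> polys_in N \<Longrightarrow> f ^ k \<in> polys_in N"
  by (induction k) (auto intro: polys_in_mult)

lemma polys_in_msubst:
  assumes "\<And>i. i \<in> I \<Longrightarrow> \<sigma> i \<in> polys_in N" "f \<in> polys_in M" "{..<M} \<subseteq> I"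
  shows "msubst \<sigma> f \<in> polys_in N"
  unfolding msubst_mon mon_def
proof (intro polys_in_sum polys_in_mult polys_in_mconst polys_in_prod polys_in_power)
  fix m i assume "m \<in> Poly_Mapping.keys f" "i \<in> Poly_Mapping.keys m"
  then have "i \<in> I" using assms(2,3) by (auto simp: polys_in_def)
  then show "\<sigma> i \<in> polys_in N" by (rule assms(1))
qed

lemma polys_in_msubst_keep:
  "f \<in> polys_in N \<Longrightarrow> msubst (keep K) f \<in> polys_in N"
  unfolding polys_in_def by (auto simp: in_keys_iff lookup_msubst_keep split: if_splits)

lemma keys_msubst_keep: "m \<in> Poly_Mapping.keys (msubst (keep K) f) \<Longrightarrow> Poly_Mapping.keys m \<subseteq> K \<and> m \<in> Poly_Mapping.keys f"
  by (auto simp: in_keys_iff lookup_msubst_keep split: if_splits)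

lemma homogeneous_msubst_keep: "homogeneous d f \<Longrightarrow> homogeneous d (msubst (keep K) f)"
  unfolding homogeneous_mdeg using keys_msubst_keep by blast

lemma mat_act_add: "mat_act N g (f + h) = mat_act N g f + mat_act N g h"
  by (simp add: mat_act_def msubst_add)
lemma mat_act_mult: "mat_act N g (f * h) = mat_act N g f * mat_act N g h"
  by (simp add: mat_act_def msubst_mult)
lemma mat_act_mconst: "mat_act N g (mconst c) = mconst c"
  by (simp add: mat_act_def)
lemma mat_act_diff: "mat_act N g (f - h) = mat_act N g f - mat_act N g h"
  by (simp add: mat_act_def msubst_diff)
lemma mat_act_sum: "mat_act N g (sum f A) = (\<Sum>x\<in>A. mat_act N g (f x))"
  by (simp add: mat_act_def msubst_sum)
lemma mat_act_prod: "mat_act N g (prod f A) = (\<Prod>x\<in>A. mat_act N g (f x))"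
  by (simp add: mat_act_def msubst_prod)
lemma mat_act_power: "mat_act N g (f ^ k) = mat_act N g f ^ k"
  by (simp add: mat_act_def msubst_power)

lemma inv_add: "f \<in> invariants N G \<Longrightarrow> h \<in> invariants N G \<Longrightarrow> f + h \<in> invariants N G"
  by (simp add: invariants_def mat_act_add polys_in_add)
lemma inv_mult: "f \<in> invariants N G \<Longrightarrow> h \<in> invariants N G \<Longrightarrow> f * h \<in> invariants N G"
  by (simp add: invariants_def mat_act_mult polys_in_mult)
lemma inv_diff: "f \<in> invariants N G \<Longrightarrow> h \<in> invariants N G \<Longrightarrow> f - h \<in> invariants N G"
  by (simp add: invariants_def mat_act_diff polys_in_diff)
lemma inv_mconst: "mconst c \<in> invariants N G"
  by (simp add: invariants_def mat_act_mconst)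
lemma inv_sum: "(\<And>x. x \<in> A \<Longrightarrow> f x \<in> invariants N G) \<Longrightarrow> sum f A \<in> invariants N G"
proof (induction A rule: infinite_finite_induct)
  case (infinite A) then show ?case using inv_mconst[of 0] by simp
next
  case empty then show ?case using inv_mconst[of 0] by simp
next
  case (insert x F) then show ?case by (auto intro: inv_add)
qed
lemma inv_prod: "(\<And>x. x \<in> A \<Longrightarrow> f x \<in> invariants N G) \<Longrightarrow> prod f A \<in> invariants N G"
proof (induction A rule: infinite_finite_induct)
  case (infinite A) then show ?case using inv_mconst[of 1] by simp
next
  case empty then show ?case using inv_mconst[of 1] by simp
next
  case (insert x F) then show ?case by (auto intro: inv_mult)
qed
lemma inv_power: "f \<in> invariants N G \<Longrightarrow> f ^ k \<in> invariants N G"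
proof (induction k)
  case 0 then show ?case using inv_mconst[of 1] by simp
next
  case (Suc k) then show ?case by (auto intro: inv_mult)
qed

lemma inv_msubst:
  assumes "\<And>i. i < M \<Longrightarrow> F i \<in> invariants N G" "P \<in> polys_in M"
  shows "msubst F P \<in> invariants N G"
  unfolding msubst_mon mon_def
proof (intro inv_sum inv_mult inv_mconst inv_prod inv_power)
  fix m i assume "m \<in> Poly_Mapping.keys P" "i \<in> Poly_Mapping.keys m"
  then have "i < M" using assms(2) by (auto simp: polys_in_def)
  then show "F i \<in> invariants N G" by (rule assms(1))
qed

definition Gmat :: "nat \<Rightarrow> (nat \<Rightarrow> nat \<Rightarrow> 'k::comm_ring_1) \<Rightarrow> nat \<Rightarrow> nat \<Rightarrow> 'k" where
  "Gmat n B = (\<lambda>i j. if i = j then 1 else if n \<le> i \<and> i < 2 * n \<and> j < n then B (i - n) j else 0)"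

definition SH :: "nat \<Rightarrow> nat \<Rightarrow> (nat \<Rightarrow> nat \<Rightarrow> 'k::comm_ring_1) set" where
  "SH q n = {B. \<forall>i<n. \<forall>j<n. B i j ^ q = - B j i}"

lemma Gn_eq: "Gn q n = Gmat n ` SH q n"
  unfolding Gn_def Gmat_def SH_def by auto

definition lin :: "nat \<Rightarrow> (nat \<Rightarrow> nat \<Rightarrow> 'k::comm_ring_1) \<Rightarrow> nat \<Rightarrow> 'k mpoly" where
  "lin n B a = (\<Sum>j<n. mconst (B a j) * mvar j)"

definition gsub :: "nat \<Rightarrow> (nat \<Rightarrow> nat \<Rightarrow> 'k::comm_ring_1) \<Rightarrow> nat \<Rightarrow> 'k mpoly" where
  "gsub n B i = (\<Sum>j<2*n. mconst (Gmat n B i j) * mvar j)"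

lemma mat_act_Gmat: "mat_act (2*n) (Gmat n B) f = msubst (gsub n B) f"
  unfolding mat_act_def gsub_def[abs_def] ..

lemma gsub_low: "i < n \<Longrightarrow> gsub n B i = mvar i"
proof -
  assume i: "i < n"
  have "gsub n B i = (\<Sum>j<2*n. if j = i then mvar j else 0)"
    unfolding gsub_def Gmat_def by (intro sum.cong refl) (use i in auto)
  also have "\<dots> = mvar i" using i by (simp add: sum.delta')
  finally show ?thesis .
qed

lemma gsub_high: "n \<le> i \<Longrightarrow> i < 2*n \<Longrightarrow> gsub n B i = mvar i + lin n B (i - n)"
proof -
  assume i: "n \<le> i" "i < 2*n"
  have split: "{..<2*n} = {..<n} \<union> {n..<2*n}" by auto
  have "gsub n B i = (\<Sum>j<n. mconst (Gmat n B i j) * mvar j) + (\<Sum>j\<in>{n..<2*n}. mconst (Gmat n B i j) * mvar j)"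
    unfolding gsub_def split by (rule sum.union_disjoint) auto
  also have "(\<Sum>j<n. mconst (Gmat n B i j) * mvar j) = lin n B (i - n)"
    unfolding lin_def Gmat_def by (intro sum.cong refl) (use i in auto)
  also have "(\<Sum>j\<in>{n..<2*n}. mconst (Gmat n B i j) * mvar j) = (\<Sum>j\<in>{n..<2*n}. if j = i then mvar j else 0)"
    unfolding Gmat_def by (intro sum.cong refl) auto
  also have "\<dots> = mvar i" using i by (simp add: sum.delta')
  finally show ?thesis by simp
qed

lemma gsub_homogeneous: "homogeneous 1 (gsub n B i)"
  unfolding gsub_def by (intro homogeneous_sum homogeneous_mconst_mult homogeneous_mvar)

lemma lin_polys: "lin n B a \<in> polys_in n"
  unfolding lin_def by (auto intro!: polys_in_sum polys_in_mult polys_in_mvar)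

lemma msubst_gsub_lowpoly: "f \<in> polys_in n \<Longrightarrow> msubst (gsub n B) f = f"
proof -
  assume f: "f \<in> polys_in n"
  have "msubst (gsub n B) f = msubst mvar f"
    by (rule msubst_cong[OF f]) (simp add: gsub_low)
  then show ?thesis by simp
qed

lemma polys_in_mono: "f \<in> polys_in N \<Longrightarrow> N \<le> M \<Longrightarrow> f \<in> polys_in M"
  unfolding polys_in_def by (auto dest!: bspec)


section \<open>The hermitian invariant\<close>

definition hh :: "nat \<Rightarrow> nat \<Rightarrow> 'k::comm_ring_1 mpoly" where
  "hh n q = (\<Sum>j<n. mvar j * (mvar j ^ (q - 1) * mvar (n + j) + mvar (n + j) ^ q))"

lemma hh_alt: "q \<ge> 1 \<Longrightarrow> hh n q = (\<Sum>j<n. mvar j ^ q * mvar (n + j) + mvar j * mvar (n + j) ^ q)"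
  unfolding hh_def
proof (intro sum.cong refl)
  fix j assume "q \<ge> 1"
  then have "mvar j * mvar j ^ (q - 1) = (mvar j ^ q :: 'a mpoly)"
    by (metis Suc_diff_le diff_Suc_1 power_Suc)
  then show "mvar j * (mvar j ^ (q - 1) * mvar (n + j) + mvar (n + j) ^ q) =
     (mvar j ^ q * mvar (n + j) + mvar j * mvar (n + j) ^ q :: 'a mpoly)"
    by (simp add: distrib_left mult.assoc[symmetric])
qed

lemma hh_polys: "hh n q \<in> polys_in (2*n)"
  unfolding hh_def by (intro polys_in_sum polys_in_mult polys_in_add polys_in_power polys_in_mvar) auto

lemma hh_homogeneous: "q \<ge> 1 \<Longrightarrow> homogeneous (q + 1) (hh n q)"
proof -
  assume q1: "q \<ge> 1"
  have "homogeneous (1 + ((q - 1) * 1 + 1)) (mvar j * (mvar j ^ (q - 1) * mvar (n + j)) :: 'a mpoly)" for j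
    by (intro homogeneous_mult homogeneous_power homogeneous_mvar)
  moreover have "homogeneous (1 + q * 1) (mvar j * mvar (n + j) ^ q :: 'a mpoly)" for j
    by (intro homogeneous_mult homogeneous_power homogeneous_mvar)
  ultimately show ?thesis
    unfolding hh_def distrib_left
    using q1 by (intro homogeneous_sum homogeneous_add) (auto simp: mult.assoc add.commute)
qed

lemma hh_invariant_one:
  fixes B :: "nat \<Rightarrow> nat \<Rightarrow> 'k::comm_ring_1"
  assumes p: "prime p" and z: "of_nat p = (0::'k)" and q: "q = p ^ r" and B: "B \<in> SH q n"
  shows "msubst (gsub n B) (hh n q) = hh n q"
proof -
  have zm: "of_nat p = (0::'k mpoly)" by (simp add: of_nat_mpoly z)
  have q1: "q \<ge> 1" using q p by (simp add: prime_gt_0_nat Suc_le_eq)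
  let ?x = "\<lambda>j. mvar j :: 'k mpoly" and ?y = "\<lambda>j. mvar (n + j) :: 'k mpoly"
  let ?L = "lin n B"
  have Lq: "?L j ^ q = (\<Sum>i<n. mconst (- B i j) * ?x i ^ q)" if j: "j < n" for j
  proof -
    have "?L j ^ q = (\<Sum>i<n. (mconst (B j i) * ?x i) ^ q)"
      unfolding lin_def q by (rule frob_sum[OF p zm])
    also have "\<dots> = (\<Sum>i<n. mconst (- B i j) * ?x i ^ q)"
    proof (intro sum.cong refl)
      fix i assume "i \<in> {..<n}"
      then have "B j i ^ q = - B i j" using B j by (auto simp: SH_def)
      then show "(mconst (B j i) * ?x i) ^ q = mconst (- B i j) * ?x i ^ q"
        by (simp add: power_mult_distrib mconst_power[symmetric])
    qed
    finally show ?thesis .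
  qed
  have "msubst (gsub n B) (hh n q) = (\<Sum>j<n. ?x j ^ q * (?y j + ?L j) + ?x j * (?y j + ?L j) ^ q)"
    unfolding hh_alt[OF q1] msubst_sum
    by (intro sum.cong refl) (simp add: msubst_add msubst_mult msubst_power gsub_low gsub_high)
  also have "\<dots> = (\<Sum>j<n. ?x j ^ q * ?y j + ?x j * ?y j ^ q) + ((\<Sum>j<n. ?x j ^ q * ?L j) + (\<Sum>j<n. ?x j * ?L j ^ q))"
    unfolding q frob_q[OF p zm] by (simp add: sum.distrib algebra_simps)
  also have "(\<Sum>j<n. ?x j ^ q * ?L j) = (\<Sum>j<n. \<Sum>i<n. mconst (B j i) * (?x j ^ q * ?x i))"
    unfolding lin_def by (simp add: sum_distrib_left algebra_simps)
  also have "(\<Sum>j<n. ?x j * ?L j ^ q) = (\<Sum>j<n. \<Sum>i<n. mconst (- B i j) * (?x i ^ q * ?x j))"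
    by (intro sum.cong refl) (simp add: Lq sum_distrib_left algebra_simps)
  also have "\<dots> = (\<Sum>i<n. \<Sum>j<n. mconst (- B i j) * (?x i ^ q * ?x j))"
    by (rule sum.swap)
  also have "\<dots> = - (\<Sum>j<n. \<Sum>i<n. mconst (B j i) * (?x j ^ q * ?x i))"
    by (simp add: mconst_uminus sum_negf)
  finally show ?thesis by (simp add: hh_alt[OF q1])
qed

lemma hh_invariant:
  assumes p: "prime p" and z: "of_nat p = (0::'k::comm_ring_1)" and q: "q = p ^ r"
  shows "(hh n q :: 'k mpoly) \<in> invariants (2*n) (Gn q n)"
  unfolding invariants_def Gn_eq
  using hh_invariant_one[OF p z q] hh_polys by (auto simp: mat_act_Gmat)


definition ev :: "(nat \<Rightarrow> 'k::comm_ring_1) \<Rightarrow> 'k mpoly \<Rightarrow> 'k" where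
  "ev v f = (\<Sum>m\<in>Poly_Mapping.keys f. Poly_Mapping.lookup f m * (\<Prod>i\<in>Poly_Mapping.keys m. v i ^ Poly_Mapping.lookup m i))"

lemma msubst_const_ev: "msubst (\<lambda>i. mconst (v i)) f = mconst (ev v f)"
  by (simp add: msubst_mon mon_def ev_def mconst_sum mconst_mult mconst_prod mconst_power)

lemma ev_msubst: "ev v (msubst \<sigma> f) = ev (\<lambda>i. ev v (\<sigma> i)) f"
proof -
  have "mconst (ev v (msubst \<sigma> f)) = msubst (\<lambda>i. mconst (v i)) (msubst \<sigma> f)"
    by (simp add: msubst_const_ev)
  also have "\<dots> = msubst (\<lambda>i. mconst (ev v (\<sigma> i))) f"
    by (subst msubst_comp) (simp add: msubst_const_ev)
  also have "\<dots> = mconst (ev (\<lambda>i. ev v (\<sigma> i)) f)"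
    by (simp add: msubst_const_ev)
  finally show ?thesis by (rule mconst_eq_iff[THEN iffD1])
qed

lemma ev_add: "ev v (f + g) = ev v f + ev v g"
  using msubst_const_ev[of v] msubst_add by (metis mconst_add mconst_eq_iff)
lemma ev_mult: "ev v (f * g) = ev v f * ev v g"
  using msubst_const_ev[of v] msubst_mult by (metis mconst_mult mconst_eq_iff)
lemma ev_mconst[simp]: "ev v (mconst c) = c"
  using msubst_const_ev[of v "mconst c"] by simp
lemma ev_mvar[simp]: "ev v (mvar i) = v i"
  using msubst_const_ev[of v "mvar i"] by simp

lemma core_lemma:
  fixes c :: "'k::field mpoly"
  assumes p: "prime p" and z: "of_nat p = (0::'k)" and q: "q = p ^ r"
    and fin: "finite (UNIV :: 'k set)" and card: "card (UNIV :: 'k set) = q ^ 2"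
    and n: "n \<ge> 2" and a: "a < n"
    and cinv: "c \<in> invariants (2*n) (Gn q n)" and hom: "homogeneous d c"
    and d1: "d \<ge> 1" and d2: "d < q ^ 2"
  shows "Poly_Mapping.lookup c (Poly_Mapping.single (n + a) d) = 0"
proof (rule ccontr)
  assume gam: "Poly_Mapping.lookup c (Poly_Mapping.single (n + a) d) \<noteq> 0"
  have q1: "q \<ge> 1" using q p by (simp add: prime_gt_0_nat Suc_le_eq)
  define b where "b = (if a = 0 then 1 else 0::nat)"
  have b: "b < n" "b \<noteq> a" "b \<noteq> n + a" using n a by (auto simp: b_def)
  have cpoly: "c \<in> polys_in (2*n)" using cinv by (simp add: invariants_def)
  define Bt where "Bt t = (\<lambda>i j. if i = a \<and> j = b then t else if i = b \<and> j = a then - (t ^ q) else (0::'k))" for t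
  have BtSH: "Bt t \<in> SH q n" for t
  proof -
    have tq: "(- (t ^ q)) ^ q = - t"
    proof -
      have "(- (t ^ q)) ^ q = - ((t ^ q) ^ q)" unfolding q by (rule frob_uminus[OF p z])
      also have "(t ^ q) ^ q = t ^ card (UNIV :: 'k set)" by (simp add: card power_mult[symmetric] power2_eq_square)
      also have "\<dots> = t" by (rule field_pow_card[OF fin])
      finally show ?thesis .
    qed
    show ?thesis unfolding SH_def Bt_def using b(2) tq q1 by (auto simp: zero_power)
  qed
  have Gt: "msubst (gsub n (Bt t)) c = c" for t
  proof -
    have "Gmat n (Bt t) \<in> Gn q n" unfolding Gn_eq using BtSH by blast
    then show ?thesis using cinv unfolding invariants_def mat_act_Gmat[symmetric] by blast
  qed
  define K where "K = {b, n + a}"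
  define P where "P = msubst (keep K) c"
  define tr where "tr t = (\<lambda>i. if i = n + a then mvar (n + a) + mconst t * mvar b else (mvar i :: 'k mpoly))" for t
  have keep_lin: "msubst (keep K) (lin n (Bt t) a') = mconst (Bt t a' b) * mvar b" for t a'
  proof -
    have "msubst (keep K) (lin n (Bt t) a') = (\<Sum>j<n. if j = b then mconst (Bt t a' b) * mvar b else 0)"
      unfolding lin_def msubst_sum
      by (intro sum.cong refl) (auto simp: msubst_mult keep_def K_def)
    also have "\<dots> = mconst (Bt t a' b) * mvar b" using b by (simp add: sum.delta')
    finally show ?thesis .
  qed
  have trP: "msubst (tr t) P = P" for t
  proof -
    have "msubst (tr t) P = msubst (\<lambda>i. msubst (tr t) (keep K i)) c"
      unfolding P_def by (rule msubst_comp)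
    also have "\<dots> = msubst (\<lambda>i. msubst (keep K) (gsub n (Bt t) i)) c"
    proof (rule msubst_cong[OF cpoly])
      fix i assume i: "i < 2 * n"
      show "msubst (tr t) (keep K i) = msubst (keep K) (gsub n (Bt t) i)"
      proof (cases "i < n")
        case True
        then show ?thesis using b by (auto simp: gsub_low keep_def K_def tr_def)
      next
        case False
        then have gi: "gsub n (Bt t) i = mvar i + lin n (Bt t) (i - n)" using i by (simp add: gsub_high)
        have bb: "Bt t (i - n) b = (if i = n + a then t else 0)"
          using False b unfolding Bt_def by auto
        have kl: "msubst (keep K) (lin n (Bt t) (i - n)) = mconst (if i = n + a then t else 0) * mvar b"
          using keep_lin bb by simp
        have ki: "keep K i = (if i = n + a then mvar i else 0)" using False b by (auto simp: keep_def K_def)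
        show ?thesis by (simp add: gi msubst_add kl ki tr_def)
      qed
    qed
    also have "\<dots> = msubst (keep K) (msubst (gsub n (Bt t)) c)"
      by (rule msubst_comp[symmetric])
    also have "\<dots> = P" by (simp add: Gt P_def)
    finally show ?thesis .
  qed
  define vs where "vs s = (\<lambda>i. if i = n + a then s else if i = b then 1 else (0::'k))" for s
  have evP: "ev (vs t) P = ev (vs 0) P" for t
  proof -
    have "ev (vs 0) P = ev (vs 0) (msubst (tr t) P)" by (simp add: trP)
    also have "\<dots> = ev (\<lambda>i. ev (vs 0) (tr t i)) P" by (rule ev_msubst)
    also have "(\<lambda>i. ev (vs 0) (tr t i)) = vs t"
      using b by (auto simp: tr_def vs_def ev_add ev_mult)
    finally show ?thesis by simp
  qed
  have keysP: "Poly_Mapping.keys m \<subseteq> K \<and> mdeg m = d" if "m \<in> Poly_Mapping.keys P" for m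
    using that hom keys_msubst_keep[of m K c] unfolding P_def homogeneous_mdeg by blast
  define mm where "mm i = Poly_Mapping.single (n + a) i + Poly_Mapping.single b (d - i)" for i
  define co where "co i = Poly_Mapping.lookup P (mm i)" for i
  have mform: "m = mm (Poly_Mapping.lookup m (n + a)) \<and> Poly_Mapping.lookup m (n + a) \<le> d"
    if m: "m \<in> Poly_Mapping.keys P" for m
  proof -
    have kK: "Poly_Mapping.keys m \<subseteq> K" and dm: "mdeg m = d" using keysP[OF m] by auto
    have "mdeg m = (\<Sum>i\<in>K. Poly_Mapping.lookup m i)" by (rule mdeg_superset) (use kK K_def in auto)
    then have sumd: "Poly_Mapping.lookup m b + Poly_Mapping.lookup m (n + a) = d"
      using dm b by (simp add: K_def)
    have "m = mm (Poly_Mapping.lookup m (n + a))"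
    proof (rule poly_mapping_eqI)
      fix i
      show "Poly_Mapping.lookup m i = Poly_Mapping.lookup (mm (Poly_Mapping.lookup m (n + a))) i"
      proof (cases "i \<in> K")
        case True then show ?thesis using b sumd by (auto simp: mm_def K_def lookup_add lookup_single)
      next
        case False
        then have "Poly_Mapping.lookup m i = 0" using kK by (auto simp: in_keys_iff)
        then show ?thesis using False by (auto simp: mm_def K_def lookup_add lookup_single)
      qed
    qed
    then show ?thesis using sumd by auto
  qed
  have evform: "ev (vs t) P = (\<Sum>i\<le>d. co i * t ^ i)" for t
  proof -
    have prodm: "(\<Prod>i\<in>Poly_Mapping.keys m. vs t i ^ Poly_Mapping.lookup m i) = t ^ Poly_Mapping.lookup m (n + a)"
      if m: "m \<in> Poly_Mapping.keys P" for m
    proof -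
      have kK: "Poly_Mapping.keys m \<subseteq> K" using keysP[OF m] by auto
      have "(\<Prod>i\<in>Poly_Mapping.keys m. vs t i ^ Poly_Mapping.lookup m i) = (\<Prod>i\<in>K. vs t i ^ Poly_Mapping.lookup m i)"
        by (rule prod.mono_neutral_left) (use kK K_def in \<open>auto simp: in_keys_iff\<close>)
      also have "\<dots> = t ^ Poly_Mapping.lookup m (n + a)" using b by (simp add: K_def vs_def)
      finally show ?thesis .
    qed
    have "ev (vs t) P = (\<Sum>m\<in>Poly_Mapping.keys P. Poly_Mapping.lookup P m * t ^ Poly_Mapping.lookup m (n + a))"
      unfolding ev_def by (intro sum.cong refl) (simp add: prodm)
    also have "\<dots> = (\<Sum>i\<in>(\<lambda>m. Poly_Mapping.lookup m (n + a)) ` Poly_Mapping.keys P. co i * t ^ i)"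
    proof -
      have inj: "inj_on (\<lambda>m. Poly_Mapping.lookup m (n + a)) (Poly_Mapping.keys P)"
        by (rule inj_onI) (metis mform)
      show ?thesis unfolding sum.reindex[OF inj] co_def
        by (intro sum.cong refl) (metis mform comp_apply)
    qed
    also have "\<dots> = (\<Sum>i\<le>d. co i * t ^ i)"
    proof (rule sum.mono_neutral_left)
      show "finite {..d}" by simp
      show "(\<lambda>m. Poly_Mapping.lookup m (n + a)) ` Poly_Mapping.keys P \<subseteq> {..d}" using mform by auto
      show "\<forall>i\<in>{..d} - (\<lambda>m. Poly_Mapping.lookup m (n + a)) ` Poly_Mapping.keys P. co i * t ^ i = 0"
      proof
        fix i assume i: "i \<in> {..d} - (\<lambda>m. Poly_Mapping.lookup m (n + a)) ` Poly_Mapping.keys P"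
        have "Poly_Mapping.lookup (mm i) (n + a) = i" using b by (simp add: mm_def lookup_add lookup_single)
        then have "mm i \<notin> Poly_Mapping.keys P" using i by force
        then show "co i * t ^ i = 0" by (simp add: co_def in_keys_iff)
      qed
    qed
    finally show ?thesis .
  qed
  define U where "U = (\<Sum>i\<le>d. monom (co i) i)"
  have polyU: "poly U t = ev (vs t) P" for t
    by (simp add: U_def poly_sum poly_monom evform)
  have coU: "coeff U d = co d"
    by (simp add: U_def coeff_sum coeff_monom sum.delta)
  have "co d = Poly_Mapping.lookup c (Poly_Mapping.single (n + a) d)"
    by (simp add: co_def mm_def P_def lookup_msubst_keep K_def)
  then have cod: "co d \<noteq> 0" using gam by simp
  define V where "V = U - [:poly U 0:]"
  have "coeff [:poly U 0:] d = 0" using d1 by (cases d) auto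
  then have coV: "coeff V d = co d" by (simp add: V_def coU)
  then have V0: "V \<noteq> 0" using cod by auto
  have degU: "degree U \<le> d"
    unfolding U_def by (rule degree_sum_le) (auto intro: order_trans[OF degree_monom_le])
  have degV: "degree V \<le> d" unfolding V_def by (rule degree_diff_le[OF degU]) simp
  have "{t. poly V t = 0} = UNIV"
    using evP by (auto simp: V_def polyU)
  then have "card (UNIV :: 'k set) \<le> degree V" using card_poly_roots_bound[OF V0] by simp
  then show False using degV d2 card by simp
qed


section \<open>Key lemma: hh is not in the ideal generated by the x's over the invariants\<close>

lemma monomial_split:
  fixes m :: "nat \<Rightarrow>\<^sub>0 nat"
  assumes "Poly_Mapping.lookup m j \<noteq> 0"
  shows "m = Poly_Mapping.single j 1 + (m - Poly_Mapping.single j 1)"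
proof (rule poly_mapping_eqI)
  fix i show "Poly_Mapping.lookup m i = Poly_Mapping.lookup (Poly_Mapping.single j 1 + (m - Poly_Mapping.single j 1)) i"
    using assms by (cases "i = j") (auto simp: lookup_add lookup_minus lookup_single)
qed

lemma hpart_mvar_mult: "hpart (Suc d) (mvar j * f) = mvar j * hpart d f"
proof (rule poly_mapping_eqI)
  fix m :: "nat \<Rightarrow>\<^sub>0 nat"
  show "Poly_Mapping.lookup (hpart (Suc d) (mvar j * f)) m = Poly_Mapping.lookup (mvar j * hpart d f) m"
  proof (cases "Poly_Mapping.lookup m j = 0")
    case True then show ?thesis by (simp add: lookup_hpart lookup_mvar_mult0)
  next
    case False
    define m' where "m' = m - Poly_Mapping.single j 1"
    have m: "m = Poly_Mapping.single j 1 + m'" unfolding m'_def by (rule monomial_split[OF False])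
    show ?thesis unfolding m lookup_hpart lookup_mvar_mult1 by (simp add: mdeg_add)
  qed
qed

lemma inv_hpart:
  assumes "f \<in> invariants N G"
  shows "hpart d f \<in> invariants N G"
proof -
  have hom: "homogeneous 1 (\<Sum>j<N. mconst (g i j) * mvar j)" for g :: "nat \<Rightarrow> nat \<Rightarrow> 'a" and i
    by (intro homogeneous_sum homogeneous_mconst_mult homogeneous_mvar)
  have "hpart d f \<in> polys_in N" using assms
    unfolding invariants_def polys_in_def by (auto simp: in_keys_iff lookup_hpart split: if_splits)
  moreover have "mat_act N g (hpart d f) = hpart d f" if "g \<in> G" for g
  proof -
    have "mat_act N g (hpart d f) = hpart d (mat_act N g f)"
      unfolding mat_act_def by (rule hpart_msubst[symmetric]) (rule hom)
    then show ?thesis using assms that by (simp add: invariants_def)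
  qed
  ultimately show ?thesis by (simp add: invariants_def)
qed

lemma single_single_mult:
  "(Poly_Mapping.single u (1::'k::comm_ring_1)) * Poly_Mapping.single v 1 = Poly_Mapping.single (u + v) 1"
  by (simp add: mult_single)

lemma lookup_hh:
  assumes n: "n \<ge> 2" and q: "q \<ge> 2"
  shows "Poly_Mapping.lookup (hh n q :: 'k::comm_ring_1 mpoly) (Poly_Mapping.single 0 1 + Poly_Mapping.single n q) = 1"
proof -
  let ?m0 = "Poly_Mapping.single 0 1 + Poly_Mapping.single n q :: nat \<Rightarrow>\<^sub>0 nat"
  have l0: "Poly_Mapping.lookup ?m0 0 = 1" and ln: "Poly_Mapping.lookup ?m0 n = q"
    using n by (auto simp: lookup_add lookup_single)
  have t1: "Poly_Mapping.single j q + Poly_Mapping.single (n + j) 1 \<noteq> ?m0" if "j < n" for j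
  proof
    assume "Poly_Mapping.single j q + Poly_Mapping.single (n + j) 1 = ?m0"
    then have "Poly_Mapping.lookup (Poly_Mapping.single j q + Poly_Mapping.single (n + j) 1) n = q" using ln by simp
    then show False using that q by (auto simp: lookup_add lookup_single when_def split: if_splits)
  qed
  have t2: "(Poly_Mapping.single j 1 + Poly_Mapping.single (n + j) q = ?m0) \<longleftrightarrow> j = 0" if "j < n" for j
  proof
    assume "Poly_Mapping.single j 1 + Poly_Mapping.single (n + j) q = ?m0"
    then have "Poly_Mapping.lookup (Poly_Mapping.single j 1 + Poly_Mapping.single (n + j) q) 0 = 1" using l0 by simp
    then show "j = 0" using that n by (auto simp: lookup_add lookup_single when_def split: if_splits)
  qed simp
  have heq: "hh n q = (\<Sum>j<n. Poly_Mapping.single (Poly_Mapping.single j q + Poly_Mapping.single (n + j) 1) (1::'k)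
        + Poly_Mapping.single (Poly_Mapping.single j 1 + Poly_Mapping.single (n + j) q) 1)"
  proof -
    have "q \<ge> 1" using q by simp
    then show ?thesis by (subst hh_alt[OF \<open>q \<ge> 1\<close>], simp only: mvar_power, simp add: mvar_def mult_single)
  qed
  have "Poly_Mapping.lookup (hh n q :: 'k mpoly) ?m0 = (\<Sum>j<n. Poly_Mapping.lookup (Poly_Mapping.single (Poly_Mapping.single j q + Poly_Mapping.single (n + j) 1) (1::'k)
        + Poly_Mapping.single (Poly_Mapping.single j 1 + Poly_Mapping.single (n + j) q) 1) ?m0)"
    by (simp only: heq lookup_sum)
  also have "\<dots> = (\<Sum>j<n. if j = 0 then 1 else 0)"
  proof (rule sum.cong[OF refl])
    fix j assume "j \<in> {..<n}"
    then have j: "j < n" by simp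
    show "Poly_Mapping.lookup (Poly_Mapping.single (Poly_Mapping.single j q + Poly_Mapping.single (n + j) 1) (1::'k)
        + Poly_Mapping.single (Poly_Mapping.single j 1 + Poly_Mapping.single (n + j) q) 1) ?m0 = (if j = 0 then 1 else 0)"
      using t1[OF j] t2[OF j] by (simp add: lookup_add lookup_single when_def)
  qed
  also have "\<dots> = 1" using n by (simp add: sum.delta)
  finally show ?thesis .
qed

lemma key_lemma:
  fixes c :: "nat \<Rightarrow> 'k::field mpoly"
  assumes p: "prime p" and z: "of_nat p = (0::'k)" and q: "q = p ^ r" and r: "r \<ge> 1"
    and fin: "finite (UNIV :: 'k set)" and card: "card (UNIV :: 'k set) = q ^ 2"
    and n: "n \<ge> 2"
    and cinv: "\<And>j. j < n \<Longrightarrow> c j \<in> invariants (2*n) (Gn q n)"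
    and eq: "hh n q = (\<Sum>j<n. mvar j * c j)"
  shows False
proof -
  have q2: "q \<ge> 2"
  proof -
    have "p \<ge> 2" using p by (simp add: prime_ge_2_nat)
    then have "p ^ 1 \<le> p ^ r" using r by (intro power_increasing) auto
    then show ?thesis using \<open>p \<ge> 2\<close> q by simp
  qed
  have q1: "q \<ge> 1" using q2 by simp
  let ?c = "\<lambda>j. hpart q (c j)"
  have "hh n q = hpart (Suc q) (hh n q :: 'k mpoly)"
    by (simp add: hpart_homogeneous[OF hh_homogeneous[OF q1]])
  also have "\<dots> = (\<Sum>j<n. mvar j * ?c j)"
    unfolding eq hpart_sum hpart_mvar_mult ..
  finally have eq2: "hh n q = (\<Sum>j<n. mvar j * ?c j)" .
  let ?m0 = "Poly_Mapping.single 0 1 + Poly_Mapping.single n q :: nat \<Rightarrow>\<^sub>0 nat"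
  have "Poly_Mapping.lookup (\<Sum>j<n. mvar j * ?c j) ?m0 = (\<Sum>j<n. if j = 0 then Poly_Mapping.lookup (?c 0) (Poly_Mapping.single n q) else 0)"
    unfolding lookup_sum
  proof (intro sum.cong refl)
    fix j assume j: "j \<in> {..<n}"
    show "Poly_Mapping.lookup (mvar j * ?c j) ?m0 = (if j = 0 then Poly_Mapping.lookup (?c 0) (Poly_Mapping.single n q) else 0)"
    proof (cases "j = 0")
      case True then show ?thesis using lookup_mvar_mult1[of 0 "?c 0" "Poly_Mapping.single n q"] by simp
    next
      case False
      then have "Poly_Mapping.lookup ?m0 j = 0" using j by (auto simp: lookup_add lookup_single)
      then show ?thesis using False by (simp add: lookup_mvar_mult0)
    qed
  qed
  also have "\<dots> = Poly_Mapping.lookup (?c 0) (Poly_Mapping.single n q)" using n by (simp add: sum.delta)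
  also have "\<dots> = 0"
  proof -
    have "q < q ^ 2" using q2 by (simp add: power2_eq_square)
    then show ?thesis
      using core_lemma[OF p z q fin card n, of 0 "?c 0" q] n q1 inv_hpart[OF cinv[of 0]] homogeneous_hpart[of q "c 0"]
      by simp
  qed
  finally show False using eq2 lookup_hh[OF n q2] by (metis zero_neq_one)
qed


section \<open>Failure of the direct summand property\<close>

lemma inv_mvar_low:
  assumes "j < n"
  shows "(mvar j :: 'k::comm_ring_1 mpoly) \<in> invariants (2*n) (Gn q n)"
  using assms unfolding invariants_def Gn_eq by (auto simp: mat_act_Gmat gsub_low intro: polys_in_mvar)

lemma homogeneous_0_const:
  assumes "homogeneous 0 f"
  shows "f = mconst (Poly_Mapping.lookup f 0)"
proof (rule poly_mapping_eqI)
  fix m :: "nat \<Rightarrow>\<^sub>0 nat"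
  show "Poly_Mapping.lookup f m = Poly_Mapping.lookup (mconst (Poly_Mapping.lookup f 0)) m"
  proof (cases "m = 0")
    case True then show ?thesis by (simp add: lookup_mconst)
  next
    case False
    have "mdeg m \<noteq> 0"
    proof
      assume "mdeg m = 0"
      then have "\<forall>i\<in>Poly_Mapping.keys m. Poly_Mapping.lookup m i = 0" by (simp add: mdeg_def)
      then have "m = 0" by (intro poly_mapping_eqI) (metis in_keys_iff lookup_zero)
      then show False using False by simp
    qed
    then have "m \<notin> Poly_Mapping.keys f" using assms by (auto simp: homogeneous_mdeg)
    then show ?thesis using False by (simp add: lookup_mconst in_keys_iff)
  qed
qed

lemma not_dsp:
  assumes p: "prime p" and z: "of_nat p = (0::'k::field)" and q: "q = p ^ r" and r: "r \<ge> 1"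
    and fin: "finite (UNIV :: 'k set)" and card: "card (UNIV :: 'k set) = q ^ 2"
    and n: "n \<ge> 2"
  shows "\<not> direct_summand_property (2 * n) (Gn q n :: (nat \<Rightarrow> nat \<Rightarrow> 'k) set)"
proof
  let ?I = "invariants (2*n) (Gn q n) :: 'k mpoly set"
  let ?P = "polys_in (2*n) :: 'k mpoly set"
  assume "direct_summand_property (2 * n) (Gn q n :: (nat \<Rightarrow> nat \<Rightarrow> 'k) set)"
  then obtain \<pi> :: "'k mpoly \<Rightarrow> 'k mpoly" where
    into: "\<And>f. f \<in> ?P \<Longrightarrow> \<pi> f \<in> ?I" and
    onto: "\<And>h. h \<in> ?I \<Longrightarrow> \<exists>f\<in>?P. \<pi> f = h" and
    lin: "\<And>a b f g. a \<in> ?I \<Longrightarrow> b \<in> ?I \<Longrightarrow> f \<in> ?P \<Longrightarrow> g \<in> ?P \<Longrightarrow> \<pi> (a * f + b * g) = a * \<pi> f + b * \<pi> g" and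
    grad: "\<And>d f. f \<in> ?P \<Longrightarrow> homogeneous d f \<Longrightarrow> homogeneous d (\<pi> f)"
    unfolding direct_summand_property_def by blast
  have I0: "0 \<in> ?I" and I1: "1 \<in> ?I" using inv_mconst[of 0] inv_mconst[of 1] by auto
  have pi0: "\<pi> 0 = 0" using lin[OF I0 I0, of 0 0] by simp
  have piadd: "\<pi> (f + g) = \<pi> f + \<pi> g" if "f \<in> ?P" "g \<in> ?P" for f g
    using lin[OF I1 I1 that] by simp
  have pimult: "\<pi> (a * f) = a * \<pi> f" if "a \<in> ?I" "f \<in> ?P" for a f
    using lin[OF that(1) I0 that(2), of 0] pi0 by simp
  have pisum: "\<pi> (sum g A) = (\<Sum>x\<in>A. \<pi> (g x))" if "\<And>x. x \<in> A \<Longrightarrow> g x \<in> ?P" for g and A :: "'b set"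
    using that
  proof (induction A rule: infinite_finite_induct)
    case (infinite A) then show ?case by (simp add: pi0)
  next
    case empty then show ?case by (simp add: pi0)
  next
    case (insert x F) then show ?case by (simp add: piadd polys_in_sum)
  qed
  define c where "c = \<pi> 1"
  have "homogeneous 0 c" unfolding c_def by (rule grad) (simp_all add: homogeneous_mconst[of 1, simplified])
  then have cc: "c = mconst (Poly_Mapping.lookup c 0)" by (rule homogeneous_0_const)
  have pia: "\<pi> a = a * c" if "a \<in> ?I" for a
    using pimult[OF that, of 1] by (simp add: c_def)
  define \<gamma> where "\<gamma> = Poly_Mapping.lookup c 0"
  have gam: "\<gamma> \<noteq> 0"
  proof
    assume g0: "\<gamma> = 0"
    then have c0: "c = 0" using cc by (simp add: \<gamma>_def)
    obtain f where f: "f \<in> ?P" "\<pi> f = 1" using onto[OF I1] by blast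
    have sP: "Poly_Mapping.single m (Poly_Mapping.lookup f m) \<in> ?P" if "m \<in> Poly_Mapping.keys f" for m
      using f(1) that by (auto simp: polys_in_def)
    have "\<pi> f = (\<Sum>m\<in>Poly_Mapping.keys f. \<pi> (Poly_Mapping.single m (Poly_Mapping.lookup f m)))"
      by (subst poly_expand[of f], rule pisum) (use sP in auto)
    then have "Poly_Mapping.lookup (\<pi> f) 0 = (\<Sum>m\<in>Poly_Mapping.keys f. Poly_Mapping.lookup (\<pi> (Poly_Mapping.single m (Poly_Mapping.lookup f m))) 0)"
      by (simp add: lookup_sum)
    also have "\<dots> = 0"
    proof (intro sum.neutral ballI)
      fix m assume m: "m \<in> Poly_Mapping.keys f"
      show "Poly_Mapping.lookup (\<pi> (Poly_Mapping.single m (Poly_Mapping.lookup f m))) 0 = 0"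
      proof (cases "m = 0")
        case True
        have "Poly_Mapping.single m (Poly_Mapping.lookup f m) = mconst (Poly_Mapping.lookup f m)"
          using True by (simp add: mconst_def)
        then show ?thesis using pia[OF inv_mconst] c0 by simp
      next
        case False
        have hm: "homogeneous (mdeg m) (\<pi> (Poly_Mapping.single m (Poly_Mapping.lookup f m)))"
          by (rule grad[OF sP[OF m] homogeneous_single])
        have "mdeg m \<noteq> 0"
        proof
          assume "mdeg m = 0"
          then have "\<forall>i\<in>Poly_Mapping.keys m. Poly_Mapping.lookup m i = 0" by (simp add: mdeg_def)
          then have "m = 0" by (intro poly_mapping_eqI) (metis in_keys_iff lookup_zero)
          then show False using False by simp
        qed
        then have "0 \<notin> Poly_Mapping.keys (\<pi> (Poly_Mapping.single m (Poly_Mapping.lookup f m)))"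
          using hm by (auto simp: homogeneous_mdeg)
        then show ?thesis by (simp add: in_keys_iff)
      qed
    qed
    finally show False using f(2) by simp
  qed
  define fj where "fj j = (mvar j ^ (q - 1) * mvar (n + j) + mvar (n + j) ^ q :: 'k mpoly)" for j
  have fjP: "fj j \<in> ?P" if "j < n" for j
    unfolding fj_def using that by (intro polys_in_add polys_in_mult polys_in_power polys_in_mvar) auto
  have hinv: "hh n q \<in> ?I" by (rule hh_invariant[OF p z q])
  have "hh n q * c = \<pi> (hh n q)" by (simp add: pia[OF hinv])
  also have "\<dots> = (\<Sum>j<n. \<pi> (mvar j * fj j))"
    unfolding hh_def fj_def[symmetric]
    by (rule pisum) (auto intro!: polys_in_mult polys_in_mvar fjP)
  also have "\<dots> = (\<Sum>j<n. mvar j * \<pi> (fj j))"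
    by (intro sum.cong refl) (simp add: pimult inv_mvar_low fjP)
  finally have eq: "hh n q * mconst \<gamma> = (\<Sum>j<n. mvar j * \<pi> (fj j))" using cc by (simp add: \<gamma>_def)
  have "hh n q = (hh n q * mconst \<gamma>) * mconst (inverse \<gamma>)"
    using gam by (simp add: mult.assoc mconst_mult[symmetric])
  also have "\<dots> = (\<Sum>j<n. mvar j * (mconst (inverse \<gamma>) * \<pi> (fj j)))"
    unfolding eq by (simp add: sum_distrib_right sum_distrib_left mult_ac)
  finally have eq2: "hh n q = (\<Sum>j<n. mvar j * (mconst (inverse \<gamma>) * \<pi> (fj j)))" .
  show False
    by (rule key_lemma[OF p z q r fin card n _ eq2]) (auto intro: inv_mult inv_mconst into fjP)
qed


section \<open>Counting: more polynomials than variables are dependent\<close>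

lemma card_pm_box:
  fixes I :: "'a set" and A :: "'a \<Rightarrow> 'b::zero set"
  assumes fin: "finite I" and z: "\<And>i. i \<in> I \<Longrightarrow> 0 \<in> A i"
  shows "card {m :: 'a \<Rightarrow>\<^sub>0 'b. Poly_Mapping.keys m \<subseteq> I \<and> (\<forall>i\<in>I. Poly_Mapping.lookup m i \<in> A i)} = card (PiE I A)"
proof (rule bij_betw_same_card)
  let ?X = "{m :: 'a \<Rightarrow>\<^sub>0 'b. Poly_Mapping.keys m \<subseteq> I \<and> (\<forall>i\<in>I. Poly_Mapping.lookup m i \<in> A i)}"
  show "bij_betw (\<lambda>m. FuncSet.restrict (Poly_Mapping.lookup m) I) ?X (PiE I A)"
  proof (rule bij_betw_imageI)
    show "inj_on (\<lambda>m. FuncSet.restrict (Poly_Mapping.lookup m) I) ?X"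
    proof (rule inj_onI)
      fix m1 m2 assume m1: "m1 \<in> ?X" and m2: "m2 \<in> ?X"
        and eq: "FuncSet.restrict (Poly_Mapping.lookup m1) I = FuncSet.restrict (Poly_Mapping.lookup m2) I"
      show "m1 = m2"
      proof (rule poly_mapping_eqI)
        fix i show "Poly_Mapping.lookup m1 i = Poly_Mapping.lookup m2 i"
        proof (cases "i \<in> I")
          case True
          have "FuncSet.restrict (Poly_Mapping.lookup m1) I i = FuncSet.restrict (Poly_Mapping.lookup m2) I i" using eq by simp
          then show ?thesis using True by simp
        next
          case False
          then have "i \<notin> Poly_Mapping.keys m1" "i \<notin> Poly_Mapping.keys m2" using m1 m2 by auto
          then show ?thesis by (simp add: in_keys_iff)
        qed
      qed
    qed
    show "(\<lambda>m. FuncSet.restrict (Poly_Mapping.lookup m) I) ` ?X = PiE I A"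
    proof
      show "(\<lambda>m. FuncSet.restrict (Poly_Mapping.lookup m) I) ` ?X \<subseteq> PiE I A" by auto
      show "PiE I A \<subseteq> (\<lambda>m. FuncSet.restrict (Poly_Mapping.lookup m) I) ` ?X"
      proof
        fix c assume c: "c \<in> PiE I A"
        define f where "f = (\<lambda>i. if i \<in> I then c i else 0)"
        have finf: "finite {i. f i \<noteq> 0}" using fin by (rule finite_subset[rotated]) (auto simp: f_def)
        define m where "m = Abs_poly_mapping f"
        have lm: "Poly_Mapping.lookup m = f" unfolding m_def using finf by simp
        have "m \<in> ?X" using c z by (auto simp: lm f_def in_keys_iff)
        moreover have "FuncSet.restrict (Poly_Mapping.lookup m) I = c"
          using c by (auto simp: lm f_def restrict_def PiE_def extensional_def)
        ultimately show "c \<in> (\<lambda>m. FuncSet.restrict (Poly_Mapping.lookup m) I) ` ?X" by force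
      qed
    qed
  qed
qed

definition polysupp :: "(nat \<Rightarrow>\<^sub>0 nat) set \<Rightarrow> 'k::comm_ring_1 mpoly set" where
  "polysupp B = {P. Poly_Mapping.keys P \<subseteq> B}"

lemma card_polysupp:
  assumes "finite B"
  shows "card (polysupp B :: 'k::comm_ring_1 mpoly set) = card (UNIV :: 'k set) ^ card B"
proof -
  have "card (polysupp B :: 'k mpoly set) = card (PiE B (\<lambda>_. UNIV :: 'k set))"
    unfolding polysupp_def using card_pm_box[OF assms, of "\<lambda>_. UNIV :: 'k set"] by simp
  then show ?thesis by (simp add: card_PiE assms)
qed

definition mbox :: "nat set \<Rightarrow> nat \<Rightarrow> (nat \<Rightarrow>\<^sub>0 nat) set" where
  "mbox I K = {m. Poly_Mapping.keys m \<subseteq> I \<and> (\<forall>i\<in>I. Poly_Mapping.lookup m i \<in> {0..K})}"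

lemma card_mbox: "finite I \<Longrightarrow> card (mbox I K) = (K + 1) ^ card I"
  unfolding mbox_def by (subst card_pm_box) (auto simp: card_PiE)

lemma finite_mbox: "finite I \<Longrightarrow> finite (mbox I K)"
  using card_mbox[of I K] by (metis card_eq_0_iff add_gr_0 less_numeral_extra(1) zero_less_power less_not_refl3)

definition good :: "nat set \<Rightarrow> nat \<Rightarrow> 'k::comm_ring_1 mpoly set" where
  "good S D = {P. \<forall>m\<in>Poly_Mapping.keys P. Poly_Mapping.keys m \<subseteq> S \<and> mdeg m \<le> D}"

lemma good_add: "f \<in> good S D \<Longrightarrow> g \<in> good S D \<Longrightarrow> f + g \<in> good S D"
  using keys_add[of f g] unfolding good_def by blast

lemma good_mono: "f \<in> good S D \<Longrightarrow> D \<le> D' \<Longrightarrow> f \<in> good S D'"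
  unfolding good_def by fastforce

lemma good_mult: "f \<in> good S D1 \<Longrightarrow> g \<in> good S D2 \<Longrightarrow> f * g \<in> good S (D1 + D2)"
proof -
  assume f: "f \<in> good S D1" and g: "g \<in> good S D2"
  show ?thesis unfolding good_def mem_Collect_eq
  proof
    fix m assume "m \<in> Poly_Mapping.keys (f * g)"
    then obtain a b where ab: "m = a + b" "a \<in> Poly_Mapping.keys f" "b \<in> Poly_Mapping.keys g"
      using keys_mult[of f g] by blast
    have "Poly_Mapping.keys a \<subseteq> S" "Poly_Mapping.keys b \<subseteq> S" "mdeg a \<le> D1" "mdeg b \<le> D2"
      using f g ab by (auto simp: good_def)
    then show "Poly_Mapping.keys m \<subseteq> S \<and> mdeg m \<le> D1 + D2"
      using keys_add[of a b] ab(1) by (auto simp: mdeg_add)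
  qed
qed

lemma good_mconst: "mconst c \<in> good S D"
  by (simp add: good_def mconst_def)

lemma good_sum: "(\<And>x. x \<in> A \<Longrightarrow> f x \<in> good S D) \<Longrightarrow> sum f A \<in> good S D"
proof (induction A rule: infinite_finite_induct)
  case (infinite A) then show ?case by (simp add: good_def)
next
  case empty then show ?case by (simp add: good_def)
next
  case (insert x F) then show ?case by (auto intro: good_add)
qed

lemma good_power: "f \<in> good S D \<Longrightarrow> f ^ k \<in> good S (k * D)"
proof (induction k)
  case 0 then show ?case using good_mconst[of 1 S 0] by simp
next
  case (Suc k) then show ?case using good_mult[of f S D "f ^ k" "k * D"] by (simp add: add.commute)
qed

lemma good_prod: "(\<And>x. x \<in> A \<Longrightarrow> f x \<in> good S (D x)) \<Longrightarrow> prod f A \<in> good S (\<Sum>x\<in>A. D x)"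
proof (induction A rule: infinite_finite_induct)
  case (infinite A) then show ?case using good_mconst[of 1 S 0] by simp
next
  case empty then show ?case using good_mconst[of 1 S 0] by simp
next
  case (insert x F) then show ?case by (simp add: good_mult)
qed

lemma good_msubst:
  assumes R: "\<And>a. a < L \<Longrightarrow> R a \<in> good S e" and T: "\<forall>m\<in>Poly_Mapping.keys T. Poly_Mapping.keys m \<subseteq> {..<L} \<and> mdeg m \<le> D"
  shows "msubst R T \<in> good S (e * D)"
  unfolding msubst_mon
proof (rule good_sum)
  fix m assume m: "m \<in> Poly_Mapping.keys T"
  have "mon R m \<in> good S (\<Sum>i\<in>Poly_Mapping.keys m. Poly_Mapping.lookup m i * e)"
    unfolding mon_def
  proof (rule good_prod)
    fix i assume "i \<in> Poly_Mapping.keys m"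
    then have "i < L" using T m by auto
    then show "R i ^ Poly_Mapping.lookup m i \<in> good S (Poly_Mapping.lookup m i * e)" by (intro good_power R)
  qed
  moreover have "(\<Sum>i\<in>Poly_Mapping.keys m. Poly_Mapping.lookup m i * e) = e * mdeg m"
    by (simp add: mdeg_def sum_distrib_left mult.commute)
  moreover have "e * mdeg m \<le> e * D" using T m by simp
  ultimately have "mon R m \<in> good S (e * D)" by (metis good_mono)
  then show "mconst (Poly_Mapping.lookup T m) * mon R m \<in> good S (e * D)"
    using good_mult[OF good_mconst[of _ S 0]] by fastforce
qed

lemma lookup_le_mdeg: "Poly_Mapping.lookup m i \<le> mdeg m"
proof (cases "i \<in> Poly_Mapping.keys m")
  case True then show ?thesis unfolding mdeg_def by (intro member_le_sum) auto
next
  case False then show ?thesis by (simp add: in_keys_iff)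
qed

lemma count_ineq:
  fixes c s L :: nat
  assumes "s < L" "c \<ge> 1"
  shows "(c * (c + 1) ^ s + 1) ^ s < ((c + 1) ^ s + 1) ^ L"
proof -
  define K where "K = (c + 1) ^ s"
  have K1: "K \<ge> 1" by (simp add: K_def)
  have "c * K + 1 \<le> (c + 1) * K" using K1 by simp
  then have "(c * K + 1) ^ s \<le> ((c + 1) * K) ^ s" by (rule power_mono) simp
  also have "\<dots> = K * K ^ s" by (simp only: power_mult_distrib K_def[symmetric])
  also have "\<dots> = K ^ (s + 1)" by simp
  also have "\<dots> < (K + 1) ^ (s + 1)" by (rule power_strict_mono) auto
  also have "\<dots> \<le> (K + 1) ^ L" by (rule power_increasing) (use assms in auto)
  finally show ?thesis by (simp add: K_def)
qed

lemma count_dependent: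
  fixes R :: "nat \<Rightarrow> 'k::field mpoly"
  assumes fin: "finite (UNIV :: 'k set)" and S: "finite S" and sL: "card S < L"
    and R: "\<And>a. a < L \<Longrightarrow> R a \<in> good S e" and e: "e \<ge> 1"
  shows "\<exists>T\<in>polys_in L. T \<noteq> 0 \<and> msubst R T = 0"
proof -
  define s where "s = card S"
  define c where "c = e * L"
  have c1: "c \<ge> 1" using e sL by (simp add: c_def)
  define K where "K = (c + 1) ^ s"
  define B1 where "B1 = mbox {..<L} K"
  define B2 where "B2 = mbox S (c * K)"
  have finB1: "finite B1" and finB2: "finite B2" by (simp_all add: B1_def B2_def finite_mbox S)
  have Q2: "card (UNIV :: 'k set) \<ge> 2"
  proof -
    have "{0, 1} \<subseteq> (UNIV :: 'k set)" by simp
    then have "card {0, 1::'k} \<le> card (UNIV :: 'k set)" using fin by (rule card_mono[rotated])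
    then show ?thesis by simp
  qed
  have cardlt: "card (polysupp B2 :: 'k mpoly set) < card (polysupp B1 :: 'k mpoly set)"
  proof -
    have "card B2 < card B1"
      using count_ineq[OF sL c1] S by (simp add: B1_def B2_def card_mbox K_def s_def)
    then show ?thesis using Q2 by (simp add: card_polysupp finB1 finB2)
  qed
  have finP2: "finite (polysupp B2 :: 'k mpoly set)"
  proof -
    have "card (polysupp B2 :: 'k mpoly set) = card (UNIV :: 'k set) ^ card B2" by (rule card_polysupp[OF finB2])
    then have "card (polysupp B2 :: 'k mpoly set) > 0" using Q2 by simp
    then show ?thesis by (rule card_ge_0_finite)
  qed
  have maps: "msubst R T \<in> polysupp B2" if T: "T \<in> polysupp B1" for T
  proof -
    have Tk: "\<forall>m\<in>Poly_Mapping.keys T. Poly_Mapping.keys m \<subseteq> {..<L} \<and> mdeg m \<le> L * K"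
    proof
      fix m assume "m \<in> Poly_Mapping.keys T"
      then have m: "m \<in> B1" using T by (auto simp: polysupp_def)
      then have km: "Poly_Mapping.keys m \<subseteq> {..<L}" by (simp add: B1_def mbox_def)
      have "mdeg m = (\<Sum>i<L. Poly_Mapping.lookup m i)" by (rule mdeg_superset) (use km in auto)
      also have "\<dots> \<le> (\<Sum>i<L. K)" by (rule sum_mono) (use m in \<open>auto simp: B1_def mbox_def\<close>)
      finally show "Poly_Mapping.keys m \<subseteq> {..<L} \<and> mdeg m \<le> L * K" using km by simp
    qed
    have "msubst R T \<in> good S (e * (L * K))" by (rule good_msubst[OF R Tk])
    then have g: "\<forall>m\<in>Poly_Mapping.keys (msubst R T). Poly_Mapping.keys m \<subseteq> S \<and> mdeg m \<le> c * K"
      unfolding good_def c_def by (simp add: mult.assoc)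
    show ?thesis unfolding polysupp_def B2_def mbox_def
    proof (clarify)
      fix m assume m: "m \<in> Poly_Mapping.keys (msubst R T)"
      show "Poly_Mapping.keys m \<subseteq> S \<and> (\<forall>i\<in>S. Poly_Mapping.lookup m i \<in> {0..c * K})"
      proof -
        have a: "Poly_Mapping.keys m \<subseteq> S" and b: "mdeg m \<le> c * K" using g m by auto
        have "Poly_Mapping.lookup m i \<le> c * K" for i using lookup_le_mdeg[of m i] b by linarith
        then show ?thesis using a by auto
      qed
    qed
  qed
  have "\<not> inj_on (msubst R) (polysupp B1)"
  proof
    assume inj: "inj_on (msubst R) (polysupp B1)"
    have "card (polysupp B1 :: 'k mpoly set) \<le> card (polysupp B2 :: 'k mpoly set)"
      by (rule card_inj_on_le[OF inj _ finP2]) (use maps in auto)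
    then show False using cardlt by simp
  qed
  then obtain T1 T2 where T: "T1 \<in> polysupp B1" "T2 \<in> polysupp B1" "T1 \<noteq> T2" "msubst R T1 = msubst R T2"
    unfolding inj_on_def by blast
  define T where "T = T1 - T2"
  have "T \<in> polys_in L"
  proof -
    have "Poly_Mapping.keys T \<subseteq> Poly_Mapping.keys T1 \<union> Poly_Mapping.keys T2"
      unfolding T_def by (auto simp: in_keys_iff lookup_minus)
    then show ?thesis using T(1,2) by (auto simp: polys_in_def polysupp_def B1_def mbox_def)
  qed
  moreover have "T \<noteq> 0" using T(3) by (simp add: T_def)
  moreover have "msubst R T = 0" using T(4) by (simp add: T_def msubst_diff)
  ultimately show ?thesis by blast
qed


lemma mdeg_eq_0: "mdeg m = 0 \<Longrightarrow> m = 0"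
proof -
  assume "mdeg m = 0"
  then have "\<forall>i\<in>Poly_Mapping.keys m. Poly_Mapping.lookup m i = 0" by (simp add: mdeg_def)
  then show "m = 0" by (intro poly_mapping_eqI) (metis in_keys_iff lookup_zero)
qed

lemma mdeg1:
  assumes "mdeg m = 1"
  shows "\<exists>j. m = Poly_Mapping.single j 1"
proof -
  have "m \<noteq> 0" using assms by auto
  then obtain j where j: "j \<in> Poly_Mapping.keys m" by (metis all_not_in_conv keys_eq_empty)
  have "mdeg m = Poly_Mapping.lookup m j + (\<Sum>i\<in>Poly_Mapping.keys m - {j}. Poly_Mapping.lookup m i)"
    unfolding mdeg_def using j by (simp add: sum.remove)
  moreover have "Poly_Mapping.lookup m j \<ge> 1" using j by (simp add: in_keys_iff Suc_le_eq)
  ultimately have l1: "Poly_Mapping.lookup m j = 1" and r0: "(\<Sum>i\<in>Poly_Mapping.keys m - {j}. Poly_Mapping.lookup m i) = 0"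
    using assms by linarith+
  have "Poly_Mapping.keys m - {j} = {}"
  proof (rule ccontr)
    assume "Poly_Mapping.keys m - {j} \<noteq> {}"
    then obtain i where i: "i \<in> Poly_Mapping.keys m - {j}" by blast
    have "finite (Poly_Mapping.keys m - {j})" by simp
    then have "Poly_Mapping.lookup m i = 0" using r0 i sum_eq_0_iff by blast
    then show False using i by (simp add: in_keys_iff)
  qed
  have "m = Poly_Mapping.single j 1"
  proof (rule poly_mapping_eqI)
    fix i show "Poly_Mapping.lookup m i = Poly_Mapping.lookup (Poly_Mapping.single j 1) i"
    proof (cases "i = j")
      case True then show ?thesis using l1 by simp
    next
      case False
      then have "i \<notin> Poly_Mapping.keys m" using \<open>Poly_Mapping.keys m - {j} = {}\<close> by blast
      then show ?thesis using False by (simp add: in_keys_iff lookup_single)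
    qed
  qed
  then show ?thesis by blast
qed

lemma mvar_mult_single: "mvar i * Poly_Mapping.single m c = Poly_Mapping.single (Poly_Mapping.single i 1 + m) c"
  by (simp add: mvar_def mult_single)

lemma ideal_split:
  fixes P :: "'k::comm_ring_1 mpoly"
  assumes P: "P \<in> polys_in N" and z: "msubst (keep S) P = 0"
  shows "\<exists>Q. (\<forall>i. Q i \<in> polys_in N) \<and> P = (\<Sum>i\<in>{..<N} - S. mvar i * Q i)"
proof -
  have ex: "\<exists>i. i \<in> Poly_Mapping.keys m \<and> i \<notin> S" if m: "m \<in> Poly_Mapping.keys P" for m
  proof (rule ccontr)
    assume "\<not> ?thesis"
    then have "Poly_Mapping.keys m \<subseteq> S" by blast
    then have "Poly_Mapping.lookup (msubst (keep S) P) m = Poly_Mapping.lookup P m" by (simp add: lookup_msubst_keep)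
    then show False using z m by (simp add: in_keys_iff)
  qed
  define ix where "ix m = (SOME i. i \<in> Poly_Mapping.keys m \<and> i \<notin> S)" for m :: "nat \<Rightarrow>\<^sub>0 nat"
  have ix: "ix m \<in> Poly_Mapping.keys m \<and> ix m \<notin> S" if "m \<in> Poly_Mapping.keys P" for m
    unfolding ix_def using someI_ex[OF ex[OF that]] .
  have ixN: "ix m \<in> {..<N} - S" if "m \<in> Poly_Mapping.keys P" for m
    using ix[OF that] that P by (auto simp: polys_in_def)
  define Q where "Q i = (\<Sum>m\<in>{m\<in>Poly_Mapping.keys P. ix m = i}.
      Poly_Mapping.single (m - Poly_Mapping.single i 1) (Poly_Mapping.lookup P m))" for i
  have "P = (\<Sum>m\<in>Poly_Mapping.keys P. Poly_Mapping.single m (Poly_Mapping.lookup P m))" by (rule poly_expand)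
  also have "\<dots> = (\<Sum>m\<in>Poly_Mapping.keys P. mvar (ix m) * Poly_Mapping.single (m - Poly_Mapping.single (ix m) 1) (Poly_Mapping.lookup P m))"
  proof (intro sum.cong refl)
    fix m assume m: "m \<in> Poly_Mapping.keys P"
    have "Poly_Mapping.lookup m (ix m) \<noteq> 0" using ix[OF m] by (simp add: in_keys_iff)
    then have "m = Poly_Mapping.single (ix m) 1 + (m - Poly_Mapping.single (ix m) 1)" by (rule monomial_split)
    then show "Poly_Mapping.single m (Poly_Mapping.lookup P m) = mvar (ix m) * Poly_Mapping.single (m - Poly_Mapping.single (ix m) 1) (Poly_Mapping.lookup P m)"
      by (simp add: mvar_mult_single)
  qed
  also have "\<dots> = (\<Sum>i\<in>{..<N} - S. \<Sum>m\<in>{m\<in>Poly_Mapping.keys P. ix m = i}. mvar (ix m) * Poly_Mapping.single (m - Poly_Mapping.single (ix m) 1) (Poly_Mapping.lookup P m))"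
    by (rule sum.group[symmetric]) (use ixN in auto)
  also have "\<dots> = (\<Sum>i\<in>{..<N} - S. mvar i * Q i)"
    unfolding Q_def sum_distrib_left by (intro sum.cong refl) auto
  finally have eq: "P = (\<Sum>i\<in>{..<N} - S. mvar i * Q i)" .
  have "Q i \<in> polys_in N" for i
    unfolding Q_def
  proof (intro polys_in_sum)
    fix m assume m: "m \<in> {m\<in>Poly_Mapping.keys P. ix m = i}"
    have "Poly_Mapping.keys (m - Poly_Mapping.single i 1) \<subseteq> Poly_Mapping.keys m"
      by (auto simp: in_keys_iff lookup_minus)
    then show "Poly_Mapping.single (m - Poly_Mapping.single i 1) (Poly_Mapping.lookup P m) \<in> polys_in N"
      using m P by (auto simp: polys_in_def)
  qed
  then show ?thesis using eq by blast
qed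

lemma div_var:
  fixes T :: "'k::comm_ring_1 mpoly"
  assumes nz: "\<forall>m\<in>Poly_Mapping.keys T. Poly_Mapping.lookup m k \<noteq> 0"
  defines "T1 \<equiv> (\<Sum>m\<in>Poly_Mapping.keys T. Poly_Mapping.single (m - Poly_Mapping.single k 1) (Poly_Mapping.lookup T m))"
  shows "T = mvar k * T1"
    and "\<forall>m'\<in>Poly_Mapping.keys T1. \<exists>m\<in>Poly_Mapping.keys T. m' = m - Poly_Mapping.single k 1"
    and "T \<in> polys_in L \<Longrightarrow> T1 \<in> polys_in L"
proof -
  have "mvar k * T1 = (\<Sum>m\<in>Poly_Mapping.keys T. Poly_Mapping.single m (Poly_Mapping.lookup T m))"
    unfolding T1_def sum_distrib_left mvar_mult_single
    by (intro sum.cong refl) (metis monomial_split nz)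
  then show "T = mvar k * T1" by (simp flip: poly_expand)
  show ks: "\<forall>m'\<in>Poly_Mapping.keys T1. \<exists>m\<in>Poly_Mapping.keys T. m' = m - Poly_Mapping.single k 1"
  proof
    fix m' assume "m' \<in> Poly_Mapping.keys T1"
    then have "Poly_Mapping.lookup T1 m' \<noteq> 0" by (simp add: in_keys_iff)
    then have "(\<Sum>m\<in>Poly_Mapping.keys T. Poly_Mapping.lookup (Poly_Mapping.single (m - Poly_Mapping.single k 1) (Poly_Mapping.lookup T m)) m') \<noteq> 0"
      by (simp add: T1_def lookup_sum)
    then obtain m where "m \<in> Poly_Mapping.keys T" "Poly_Mapping.lookup (Poly_Mapping.single (m - Poly_Mapping.single k 1) (Poly_Mapping.lookup T m)) m' \<noteq> 0"
      by (meson sum.neutral)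
    then show "\<exists>m\<in>Poly_Mapping.keys T. m' = m - Poly_Mapping.single k 1"
      by (auto simp: lookup_single when_def split: if_splits)
  qed
  show "T \<in> polys_in L \<Longrightarrow> T1 \<in> polys_in L"
  proof -
    assume TL: "T \<in> polys_in L"
    show ?thesis unfolding polys_in_def mem_Collect_eq
    proof
      fix m' assume "m' \<in> Poly_Mapping.keys T1"
      then obtain m where m: "m \<in> Poly_Mapping.keys T" "m' = m - Poly_Mapping.single k 1" using ks by blast
      have "Poly_Mapping.keys m' \<subseteq> Poly_Mapping.keys m" using m(2) by (auto simp: in_keys_iff lookup_minus)
      then show "Poly_Mapping.keys m' \<subseteq> {..<L}" using TL m(1) by (auto simp: polys_in_def)
    qed
  qed
qed

lemma idom_test: "(a::'k::field mpoly) * b = 0 \<Longrightarrow> a = 0 \<or> b = 0"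
  by simp


lemma inj_Y:
  fixes T :: "'k::comm_ring_1 mpoly"
  assumes T: "T \<in> polys_in (Suc n)" and Y: "\<And>a. a < n \<Longrightarrow> \<sigma> a = mvar (n + a) ^ M a"
    and Yn: "\<sigma> n = 0" and M: "\<And>a. a < n \<Longrightarrow> M a \<ge> 1" and z: "msubst \<sigma> T = 0"
  shows "\<forall>m\<in>Poly_Mapping.keys T. Poly_Mapping.lookup m n \<noteq> 0"
proof (rule ccontr)
  assume "\<not> ?thesis"
  then obtain m0 where m0: "m0 \<in> Poly_Mapping.keys T" "Poly_Mapping.lookup m0 n = 0" by blast
  define \<phi> where "\<phi> m = (\<Sum>a\<in>Poly_Mapping.keys m. Poly_Mapping.single (n + a) (M a * Poly_Mapping.lookup m a))" for m :: "nat \<Rightarrow>\<^sub>0 nat"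
  have lphi: "Poly_Mapping.lookup (\<phi> m) (n + a) = M a * Poly_Mapping.lookup m a" for m a
  proof -
    have "Poly_Mapping.lookup (\<phi> m) (n + a) = (\<Sum>b\<in>Poly_Mapping.keys m. if b = a then M a * Poly_Mapping.lookup m a else 0)"
      unfolding \<phi>_def lookup_sum by (intro sum.cong refl) (auto simp: lookup_single)
    also have "\<dots> = M a * Poly_Mapping.lookup m a" by (simp add: sum.delta in_keys_iff)
    finally show ?thesis .
  qed
  have kn: "Poly_Mapping.keys m \<subseteq> {..<n}" if "m \<in> Poly_Mapping.keys T" "Poly_Mapping.lookup m n = 0" for m
  proof -
    have "Poly_Mapping.keys m \<subseteq> {..<Suc n}" using T that(1) by (auto simp: polys_in_def)
    moreover have "n \<notin> Poly_Mapping.keys m" using that(2) by (simp add: in_keys_iff)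
    ultimately show ?thesis using less_Suc_eq by auto
  qed
  have phi_inj: "m1 = m2" if "Poly_Mapping.keys m1 \<subseteq> {..<n}" "Poly_Mapping.keys m2 \<subseteq> {..<n}" "\<phi> m1 = \<phi> m2" for m1 m2
  proof (rule poly_mapping_eqI)
    fix a show "Poly_Mapping.lookup m1 a = Poly_Mapping.lookup m2 a"
    proof (cases "a < n")
      case True
      have "M a * Poly_Mapping.lookup m1 a = M a * Poly_Mapping.lookup m2 a" using that(3) lphi by metis
      then show ?thesis using M[OF True] by simp
    next
      case False
      then have "a \<notin> Poly_Mapping.keys m1" "a \<notin> Poly_Mapping.keys m2" using that by auto
      then show ?thesis by (simp add: in_keys_iff)
    qed
  qed
  have monY: "mon \<sigma> m = (if Poly_Mapping.lookup m n = 0 then Poly_Mapping.single (\<phi> m) 1 else 0)"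
    if m: "m \<in> Poly_Mapping.keys T" for m
  proof (cases "Poly_Mapping.lookup m n = 0")
    case True
    have km: "Poly_Mapping.keys m \<subseteq> {..<n}" by (rule kn[OF m True])
    have "mon \<sigma> m = (\<Prod>a\<in>Poly_Mapping.keys m. Poly_Mapping.single (Poly_Mapping.single (n + a) (M a * Poly_Mapping.lookup m a)) (1::'k))"
      unfolding mon_def
    proof (intro prod.cong refl)
      fix a assume "a \<in> Poly_Mapping.keys m"
      then have "a < n" using km by auto
      then have "\<sigma> a ^ Poly_Mapping.lookup m a = mvar (n + a) ^ (M a * Poly_Mapping.lookup m a)"
        by (simp add: Y power_mult)
      then show "\<sigma> a ^ Poly_Mapping.lookup m a = Poly_Mapping.single (Poly_Mapping.single (n + a) (M a * Poly_Mapping.lookup m a)) 1"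
        by (simp only: mvar_power)
    qed
    also have "\<dots> = Poly_Mapping.single (\<phi> m) 1" unfolding \<phi>_def by (rule prod_singles)
    finally show ?thesis using True by simp
  next
    case False
    then have "n \<in> Poly_Mapping.keys m" by (simp add: in_keys_iff)
    moreover have "\<sigma> n ^ Poly_Mapping.lookup m n = 0" using False by (simp add: Yn zero_power)
    ultimately have "mon \<sigma> m = 0" unfolding mon_def by (intro prod_zero) auto
    then show ?thesis using False by simp
  qed
  have "0 = Poly_Mapping.lookup (msubst \<sigma> T) (\<phi> m0)" using z by simp
  also have "\<dots> = (\<Sum>m\<in>Poly_Mapping.keys T. if m = m0 then Poly_Mapping.lookup T m else 0)"
    unfolding msubst_mon lookup_sum
  proof (intro sum.cong refl)
    fix m assume m: "m \<in> Poly_Mapping.keys T"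
    show "Poly_Mapping.lookup (mconst (Poly_Mapping.lookup T m) * mon \<sigma> m) (\<phi> m0) = (if m = m0 then Poly_Mapping.lookup T m else 0)"
    proof (cases "Poly_Mapping.lookup m n = 0")
      case True
      have "\<phi> m = \<phi> m0 \<longleftrightarrow> m = m0" using phi_inj[OF kn[OF m True] kn[OF m0]] by auto
      then show ?thesis using True by (simp add: monY[OF m] mconst_mult_single lookup_single when_def)
    next
      case False
      then have "m \<noteq> m0" using m0 by auto
      then show ?thesis using False by (simp add: monY[OF m])
    qed
  qed
  also have "\<dots> = Poly_Mapping.lookup T m0" using m0 by (simp add: sum.delta)
  finally show False using m0(1) by (simp add: in_keys_iff)
qed


section \<open>Norm invariants\<close>

definition W :: "nat \<Rightarrow> nat \<Rightarrow> nat \<Rightarrow> 'k::comm_ring_1 mpoly set" where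
  "W n q a = (\<lambda>B. lin n B a) ` SH q n"

definition Na :: "nat \<Rightarrow> nat \<Rightarrow> nat \<Rightarrow> 'k::comm_ring_1 mpoly" where
  "Na n q a = (\<Prod>w\<in>W n q a. mvar (n + a) + w)"

lemma W_finite:
  assumes "finite (UNIV :: 'k::comm_ring_1 set)"
  shows "finite (W n q a :: 'k mpoly set)"
proof -
  have "W n q a \<subseteq> (\<lambda>c. \<Sum>j<n. mconst (c j) * mvar j) ` PiE {..<n} (\<lambda>_. UNIV :: 'k set)"
  proof
    fix w assume "w \<in> (W n q a :: 'k mpoly set)"
    then obtain B where w: "w = lin n B a" unfolding W_def by blast
    have "w = (\<lambda>c. \<Sum>j<n. mconst (c j) * mvar j) (FuncSet.restrict (B a) {..<n})"
      unfolding w lin_def by (intro sum.cong refl) auto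
    moreover have "FuncSet.restrict (B a) {..<n} \<in> PiE {..<n} (\<lambda>_. UNIV :: 'k set)" by simp
    ultimately show "w \<in> (\<lambda>c. \<Sum>j<n. mconst (c j) * mvar j) ` PiE {..<n} (\<lambda>_. UNIV :: 'k set)"
      by (rule image_eqI)
  qed
  moreover have "finite (PiE {..<n} (\<lambda>_. UNIV :: 'k set))" using assms by (intro finite_PiE) auto
  ultimately show ?thesis by (meson finite_imageI finite_subset)
qed

lemma W_zero: "q \<ge> 1 \<Longrightarrow> (0 :: 'k::comm_ring_1 mpoly) \<in> W n q a"
proof -
  assume q: "q \<ge> 1"
  have "(\<lambda>i j. 0::'k) \<in> SH q n" using q by (simp add: SH_def zero_power)
  moreover have "lin n (\<lambda>i j. 0::'k) a = 0" by (simp add: lin_def)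
  ultimately show ?thesis unfolding W_def by (intro image_eqI[of _ "\<lambda>B. lin n B a" "\<lambda>i j. 0::'k"]) simp_all
qed

lemma W_add:
  assumes p: "prime p" and z: "of_nat p = (0::'k::comm_ring_1)" and q: "q = p ^ r"
    and w1: "w1 \<in> (W n q a :: 'k mpoly set)" and w2: "w2 \<in> W n q a"
  shows "w1 + w2 \<in> W n q a"
proof -
  obtain B1 B2 where B: "B1 \<in> SH q n" "B2 \<in> SH q n" "w1 = lin n B1 a" "w2 = lin n B2 a"
    using w1 w2 unfolding W_def by blast
  have "(\<lambda>i j. B1 i j + B2 i j) \<in> SH q n"
    unfolding SH_def mem_Collect_eq
  proof (intro allI impI)
    fix i j assume ij: "i < n" "j < n"
    have "(B1 i j + B2 i j) ^ q = B1 i j ^ q + B2 i j ^ q" unfolding q by (rule frob_q[OF p z])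
    also have "\<dots> = - B1 j i + - B2 j i" using B(1,2) ij by (simp add: SH_def)
    finally show "(B1 i j + B2 i j) ^ q = - (B1 j i + B2 j i)" by simp
  qed
  moreover have "lin n (\<lambda>i j. B1 i j + B2 i j) a = w1 + w2"
    unfolding B(3,4) lin_def by (simp only: mconst_add distrib_right sum.distrib)
  ultimately show ?thesis unfolding W_def by (intro image_eqI[of _ "\<lambda>B. lin n B a" "\<lambda>i j. B1 i j + B2 i j"]) simp_all
qed

lemma W_polys: "w \<in> W n q a \<Longrightarrow> w \<in> polys_in n"
  unfolding W_def using lin_polys by blast

lemma keepY_lin: "msubst (keep {i. n \<le> i}) (lin n B a) = 0"
  unfolding lin_def msubst_sum by (intro sum.neutral) (auto simp: msubst_mult keep_def)

lemma Na_polys: "Na n q a \<in> polys_in (2 * n)" if "a < n"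
  unfolding Na_def
proof (intro polys_in_prod polys_in_add)
  show "mvar (n + a) \<in> polys_in (2 * n)" using that by (intro polys_in_mvar) auto
  fix w assume "w \<in> W n q a"
  then show "w \<in> polys_in (2*n)" using W_polys polys_in_mono by fastforce
qed

lemma Na_invariant:
  assumes p: "prime p" and z: "of_nat p = (0::'k::comm_ring_1)" and q: "q = p ^ r"
    and fin: "finite (UNIV :: 'k set)" and a: "a < n"
  shows "(Na n q a :: 'k mpoly) \<in> invariants (2*n) (Gn q n)"
proof -
  have "msubst (gsub n B) (Na n q a :: 'k mpoly) = Na n q a" if B: "B \<in> SH q n" for B
  proof -
    let ?W = "W n q a :: 'k mpoly set"
    let ?l = "lin n B a"
    have lW: "?l \<in> ?W" using B unfolding W_def by blast
    have finW: "finite ?W" by (rule W_finite[OF fin])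
    have "msubst (gsub n B) (Na n q a) = (\<Prod>w\<in>?W. mvar (n + a) + (?l + w))"
      unfolding Na_def msubst_prod
    proof (intro prod.cong refl)
      fix w assume w: "w \<in> ?W"
      have "msubst (gsub n B) w = w" by (rule msubst_gsub_lowpoly[OF W_polys[OF w]])
      moreover have "gsub n B (n + a) = mvar (n + a) + ?l" using a by (simp add: gsub_high)
      ultimately show "msubst (gsub n B) (mvar (n + a) + w) = mvar (n + a) + (?l + w)"
        by (simp add: msubst_add add.assoc)
    qed
    also have "\<dots> = (\<Prod>w\<in>(\<lambda>w. ?l + w) ` ?W. mvar (n + a) + w)"
      by (rule prod.reindex[symmetric, unfolded comp_def]) (auto intro: inj_onI)
    also have "(\<lambda>w. ?l + w) ` ?W = ?W"
    proof (rule card_subset_eq[OF finW])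
      show "(\<lambda>w. ?l + w) ` ?W \<subseteq> ?W" using W_add[OF p z q lW] by auto
      show "card ((\<lambda>w. ?l + w) ` ?W) = card ?W" by (rule card_image) (auto intro: inj_onI)
    qed
    finally show ?thesis by (simp add: Na_def)
  qed
  then show ?thesis unfolding invariants_def Gn_eq using Na_polys[OF a]
    by (auto simp: mat_act_Gmat)
qed

lemma keepY_Na:
  assumes "a < n"
  shows "msubst (keep {i. n \<le> i}) (Na n q a :: 'k::comm_ring_1 mpoly) = mvar (n + a) ^ card (W n q a :: 'k mpoly set)"
proof -
  have "msubst (keep {i. n \<le> i}) (Na n q a :: 'k mpoly) = (\<Prod>w\<in>(W n q a :: 'k mpoly set). (mvar (n + a) :: 'k mpoly))"
    unfolding Na_def msubst_prod
  proof (intro prod.cong refl)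
    fix w assume "w \<in> (W n q a :: 'k mpoly set)"
    then obtain B where "w = lin n B a" unfolding W_def by blast
    then show "msubst (keep {i. n \<le> i}) (mvar (n + a) + w) = mvar (n + a)"
      by (simp add: msubst_add keepY_lin keep_def)
  qed
  then show ?thesis by simp
qed

lemma keepY_hh: "msubst (keep {i. n \<le> i}) (hh n q :: 'k::comm_ring_1 mpoly) = 0"
  unfolding hh_def msubst_sum by (intro sum.neutral) (auto simp: msubst_mult keep_def)


lemma single1_eq: "(k::nat) \<noteq> 0 \<Longrightarrow> Poly_Mapping.single j k = Poly_Mapping.single j0 k \<longleftrightarrow> j = j0"
  by (metis lookup_single_eq lookup_single_not_eq)

lemma lin_inv:
  fixes f :: "'k::field mpoly"
  assumes p: "prime p" and z: "of_nat p = (0::'k)" and q: "q = p ^ r"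
    and fin: "finite (UNIV :: 'k set)" and card: "card (UNIV :: 'k set) = q ^ 2"
    and n: "n \<ge> 2" and q2: "1 < q ^ 2"
    and finv: "f \<in> invariants (2*n) (Gn q n)" and hom: "homogeneous 1 f"
  shows "f = (\<Sum>j<n. mconst (Poly_Mapping.lookup f (Poly_Mapping.single j 1)) * mvar j)"
proof -
  have kf: "\<exists>j<n. m = Poly_Mapping.single j 1" if m: "m \<in> Poly_Mapping.keys f" for m
  proof -
    have "mdeg m = 1" using hom m by (simp add: homogeneous_mdeg)
    then obtain j where j: "m = Poly_Mapping.single j 1" using mdeg1 by blast
    have "j < 2 * n" using finv m j by (auto simp: invariants_def polys_in_def)
    moreover have "\<not> n \<le> j"
    proof
      assume nj: "n \<le> j"
      then have "j - n < n" using \<open>j < 2 * n\<close> by simp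
      have "Poly_Mapping.lookup f (Poly_Mapping.single (n + (j - n)) 1) = 0"
        by (rule core_lemma[OF p z q fin card n \<open>j - n < n\<close> finv hom]) (use q2 in auto)
      then have "Poly_Mapping.lookup f m = 0" using nj j by simp
      then show False using m by (simp add: in_keys_iff)
    qed
    then have "j < n" by simp
    then show ?thesis using j by blast
  qed
  show ?thesis
  proof (rule poly_mapping_eqI)
    fix m
    have "Poly_Mapping.lookup (\<Sum>j<n. mconst (Poly_Mapping.lookup f (Poly_Mapping.single j 1)) * mvar j) m
        = (\<Sum>j<n. if Poly_Mapping.single j 1 = m then Poly_Mapping.lookup f (Poly_Mapping.single j 1) else 0)"
      unfolding lookup_sum by (intro sum.cong refl) (simp add: mvar_def mconst_mult_single lookup_single when_def)
    also have "\<dots> = Poly_Mapping.lookup f m"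
    proof (cases "\<exists>j0<n. m = Poly_Mapping.single j0 1")
      case True
      then obtain j0 where j0: "j0 < n" "m = Poly_Mapping.single j0 1" by blast
      have "(\<Sum>j<n. if Poly_Mapping.single j 1 = m then Poly_Mapping.lookup f (Poly_Mapping.single j 1) else 0)
          = (\<Sum>j<n. if j = j0 then Poly_Mapping.lookup f m else 0)"
        by (intro sum.cong refl) (simp add: j0 single1_eq)
      also have "\<dots> = Poly_Mapping.lookup f m" using j0 by simp
      finally show ?thesis .
    next
      case False
      then have "m \<notin> Poly_Mapping.keys f" using kf by blast
      moreover have "(\<Sum>j<n. if Poly_Mapping.single j 1 = m then Poly_Mapping.lookup f (Poly_Mapping.single j 1) else 0) = 0"
        using False by (intro sum.neutral) auto
      ultimately show ?thesis by (simp add: in_keys_iff)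
    qed
    finally show "Poly_Mapping.lookup f m = Poly_Mapping.lookup (\<Sum>j<n. mconst (Poly_Mapping.lookup f (Poly_Mapping.single j 1)) * mvar j) m" by simp
  qed
qed


section \<open>Failure of coregularity\<close>

lemma not_coregular:
  assumes p: "prime p" and z: "of_nat p = (0::'k::field)" and q: "q = p ^ r" and r: "r \<ge> 1"
    and fin: "finite (UNIV :: 'k set)" and card: "card (UNIV :: 'k set) = q ^ 2"
    and n: "n \<ge> 2"
  shows "\<not> coregular (2 * n) (Gn q n :: (nat \<Rightarrow> nat \<Rightarrow> 'k) set)"
proof
  let ?N = "2 * n"
  let ?I = "invariants (2*n) (Gn q n) :: 'k mpoly set"
  assume "coregular (2 * n) (Gn q n :: (nat \<Rightarrow> nat \<Rightarrow> 'k) set)"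
  then obtain F :: "nat \<Rightarrow> 'k mpoly" where
    F1: "\<And>i. i < ?N \<Longrightarrow> F i \<in> ?I \<and> (\<exists>d. homogeneous d (F i))" and
    F2: "\<And>P. P \<in> polys_in ?N \<Longrightarrow> msubst F P = 0 \<Longrightarrow> P = 0" and
    F3: "\<And>f. f \<in> ?I \<Longrightarrow> \<exists>P\<in>polys_in ?N. f = msubst F P"
    unfolding coregular_def by blast
  have q2: "q \<ge> 2"
  proof -
    have "p \<ge> 2" using p by (simp add: prime_ge_2_nat)
    then have "p ^ 1 \<le> p ^ r" using r by (intro power_increasing) auto
    then show ?thesis using \<open>p \<ge> 2\<close> q by simp
  qed
  have q2': "1 < q ^ 2"
  proof -
    have "2 * 2 \<le> q * q" using mult_le_mono[OF q2 q2] .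
    then show ?thesis by (simp add: power2_eq_square)
  qed
  have Q2: "card (UNIV :: 'k set) \<ge> 2" using q2' card by simp
  define dg where "dg i = (SOME d. homogeneous d (F i))" for i
  have homF: "homogeneous (dg i) (F i)" if "i < ?N" for i
    unfolding dg_def using F1[OF that] by (metis someI_ex)
  have Finv: "F i \<in> ?I" if "i < ?N" for i using F1[OF that] by blast
  have mvar_nz: "mvar i \<noteq> (0::'k mpoly)" for i unfolding mvar_def by (metis lookup_single_eq lookup_zero zero_neq_one)
  have dgpos: "dg i \<ge> 1" if i: "i < ?N" for i
  proof (rule ccontr)
    assume "\<not> dg i \<ge> 1"
    then have "dg i = 0" by simp
    then have "homogeneous 0 (F i)" using homF[OF i] by simp
    then have Fc: "F i = mconst (Poly_Mapping.lookup (F i) 0)" by (rule homogeneous_0_const)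
    define P where "P = mvar i - mconst (Poly_Mapping.lookup (F i) 0)"
    have "P \<in> polys_in ?N" unfolding P_def using i by (intro polys_in_diff polys_in_mvar polys_in_mconst)
    moreover have "msubst F P = 0" unfolding P_def msubst_diff msubst_mvar msubst_mconst
      by (simp only: Fc[symmetric] diff_self)
    ultimately have "P = 0" by (rule F2)
    moreover have "Poly_Mapping.lookup P (Poly_Mapping.single i 1) = 1"
    proof -
      have "Poly_Mapping.single i (1::nat) \<noteq> 0" by (metis lookup_single_eq lookup_zero one_neq_zero)
      then show ?thesis by (simp add: P_def lookup_minus mvar_def lookup_mconst)
    qed
    ultimately show False by simp
  qed
  define D1 where "D1 = {i. i < ?N \<and> dg i = 1}"
  define S where "S = {i. i < ?N \<and> dg i \<noteq> 1}"
  define \<Lambda> where "\<Lambda> i j = Poly_Mapping.lookup (F i) (Poly_Mapping.single j 1)" for i j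
  have Flin: "F i = (\<Sum>j<n. mconst (\<Lambda> i j) * mvar j)" if "i \<in> D1" for i
  proof -
    have i: "i < ?N" "dg i = 1" using that by (auto simp: D1_def)
    have "homogeneous 1 (F i)" using homF[OF i(1)] i(2) by simp
    then show ?thesis unfolding \<Lambda>_def by (rule lin_inv[OF p z q fin card n q2' Finv[OF i(1)]])
  qed
  have finD1: "finite D1" and finS: "finite S" by (auto simp: D1_def S_def)
  have xspan: "\<exists>cc. mvar j = (\<Sum>i\<in>D1. mconst (cc i) * F i)" if j: "j < n" for j
  proof -
    obtain P where P: "P \<in> polys_in ?N" "mvar j = msubst F P"
      using F3[OF inv_mvar_low[OF j]] by blast
    define wt where "wt m = (\<Sum>i\<in>Poly_Mapping.keys m. Poly_Mapping.lookup m i * dg i)" for m :: "nat \<Rightarrow>\<^sub>0 nat"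
    have kN: "Poly_Mapping.keys m \<subseteq> {..<?N}" if "m \<in> Poly_Mapping.keys P" for m
      using P(1) that by (auto simp: polys_in_def)
    have homt: "homogeneous (wt m) (mconst (Poly_Mapping.lookup P m) * mon F m)" if m: "m \<in> Poly_Mapping.keys P" for m
      unfolding wt_def by (intro homogeneous_mconst_mult homogeneous_mon) (use kN[OF m] homF in auto)
    have "mvar j = hpart 1 (mvar j :: 'k mpoly)" by (simp add: hpart_homogeneous[OF homogeneous_mvar])
    also have "\<dots> = (\<Sum>m\<in>Poly_Mapping.keys P. if wt m = 1 then mconst (Poly_Mapping.lookup P m) * mon F m else 0)"
      unfolding P(2) msubst_mon hpart_sum by (intro sum.cong refl) (auto simp: hpart_homogeneous[OF homt])
    also have "\<dots> = (\<Sum>m\<in>{m\<in>Poly_Mapping.keys P. wt m = 1}. mconst (Poly_Mapping.lookup P m) * mon F m)"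
      by (simp add: sum.inter_filter)
    also have "{m\<in>Poly_Mapping.keys P. wt m = 1} = (\<lambda>i. Poly_Mapping.single i 1) ` {i\<in>D1. Poly_Mapping.single i 1 \<in> Poly_Mapping.keys P}"
    proof
      show "{m\<in>Poly_Mapping.keys P. wt m = 1} \<subseteq> (\<lambda>i. Poly_Mapping.single i 1) ` {i\<in>D1. Poly_Mapping.single i 1 \<in> Poly_Mapping.keys P}"
      proof
        fix m assume m: "m \<in> {m\<in>Poly_Mapping.keys P. wt m = 1}"
        then have mk: "m \<in> Poly_Mapping.keys P" and w1: "wt m = 1" by auto
        have "mdeg m \<le> wt m" unfolding mdeg_def wt_def
          by (intro sum_mono) (use kN[OF mk] dgpos in force)
        moreover have "mdeg m \<noteq> 0"
        proof
          assume "mdeg m = 0"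
          then have "m = 0" by (rule mdeg_eq_0)
          then show False using w1 by (simp add: wt_def)
        qed
        ultimately have "mdeg m = 1" using w1 by simp
        then obtain i where mi: "m = Poly_Mapping.single i 1" using mdeg1 by blast
        have "i < ?N" using kN[OF mk] mi by auto
        moreover have "dg i = 1" using w1 mi by (simp add: wt_def)
        ultimately show "m \<in> (\<lambda>i. Poly_Mapping.single i 1) ` {i\<in>D1. Poly_Mapping.single i 1 \<in> Poly_Mapping.keys P}"
          using mk mi by (auto simp: D1_def)
      qed
      show "(\<lambda>i. Poly_Mapping.single i 1) ` {i\<in>D1. Poly_Mapping.single i 1 \<in> Poly_Mapping.keys P} \<subseteq> {m\<in>Poly_Mapping.keys P. wt m = 1}"
        by (auto simp: wt_def D1_def)
    qed
    also have "(\<Sum>m\<in>(\<lambda>i. Poly_Mapping.single i 1) ` {i\<in>D1. Poly_Mapping.single i 1 \<in> Poly_Mapping.keys P}. mconst (Poly_Mapping.lookup P m) * mon F m)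
        = (\<Sum>i\<in>{i\<in>D1. Poly_Mapping.single i 1 \<in> Poly_Mapping.keys P}. mconst (Poly_Mapping.lookup P (Poly_Mapping.single i 1)) * F i)"
      by (subst sum.reindex) (auto intro: inj_onI simp: single1_eq mon_def)
    also have "\<dots> = (\<Sum>i\<in>D1. mconst (Poly_Mapping.lookup P (Poly_Mapping.single i 1)) * F i)"
      by (rule sum.mono_neutral_left) (auto simp: finD1 in_keys_iff)
    finally show ?thesis by (rule exI[of _ "\<lambda>i. Poly_Mapping.lookup P (Poly_Mapping.single i 1)"])
  qed
  then obtain \<mu>x where \<mu>x: "\<And>j. j < n \<Longrightarrow> mvar j = (\<Sum>i\<in>D1. mconst (\<mu>x j i) * F i)" by metis
  have cardD1: "n \<le> card D1"
  proof -
    let ?Q = "card (UNIV :: 'k set)"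
    define \<Phi> where "\<Phi> c = (\<Sum>j<n. mconst (c j) * mvar j :: 'k mpoly)" for c :: "nat \<Rightarrow> 'k"
    define \<Psi> where "\<Psi> d = (\<Sum>i\<in>D1. mconst (d i) * F i)" for d :: "nat \<Rightarrow> 'k"
    have lphi: "Poly_Mapping.lookup (\<Phi> c) (Poly_Mapping.single j 1) = c j" if "j < n" for c j
    proof -
      have "Poly_Mapping.lookup (\<Phi> c) (Poly_Mapping.single j 1) = (\<Sum>j'<n. if j' = j then c j else 0)"
        unfolding \<Phi>_def lookup_sum
        by (intro sum.cong refl) (auto simp: mvar_def mconst_mult_single lookup_single when_def single1_eq)
      then show ?thesis using that by simp
    qed
    have inj: "inj_on \<Phi> (PiE {..<n} (\<lambda>_. UNIV))"
    proof (rule inj_onI)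
      fix c1 c2 assume c: "c1 \<in> PiE {..<n} (\<lambda>_. UNIV)" "c2 \<in> PiE {..<n} (\<lambda>_. UNIV)" and eq: "\<Phi> c1 = \<Phi> c2"
      show "c1 = c2"
      proof
        fix x show "c1 x = c2 x"
        proof (cases "x < n")
          case True
          have "c1 x = Poly_Mapping.lookup (\<Phi> c1) (Poly_Mapping.single x 1)" by (rule lphi[OF True, symmetric])
          also have "\<dots> = Poly_Mapping.lookup (\<Phi> c2) (Poly_Mapping.single x 1)" by (simp only: eq)
          also have "\<dots> = c2 x" by (rule lphi[OF True])
          finally show ?thesis .
        next
          case False
          then have xn: "x \<notin> {..<n}" by simp
          show ?thesis by (simp only: PiE_arb[OF c(1) xn] PiE_arb[OF c(2) xn])
        qed
      qed
    qed
    have sub: "\<Phi> ` PiE {..<n} (\<lambda>_. UNIV) \<subseteq> \<Psi> ` PiE D1 (\<lambda>_. UNIV)"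
    proof
      fix y assume "y \<in> \<Phi> ` PiE {..<n} (\<lambda>_. UNIV)"
      then obtain c where y: "y = \<Phi> c" by blast
      have "\<Phi> c = (\<Sum>j<n. mconst (c j) * (\<Sum>i\<in>D1. mconst (\<mu>x j i) * F i))"
        unfolding \<Phi>_def by (intro sum.cong refl) (simp add: \<mu>x)
      also have "\<dots> = (\<Sum>i\<in>D1. mconst (\<Sum>j<n. c j * \<mu>x j i) * F i)"
        by (simp add: sum_distrib_left sum_distrib_right mconst_sum mconst_mult mult.assoc) (rule sum.swap)
      also have "\<dots> = \<Psi> (FuncSet.restrict (\<lambda>i. \<Sum>j<n. c j * \<mu>x j i) D1)"
        unfolding \<Psi>_def by (intro sum.cong refl) simp
      finally show "y \<in> \<Psi> ` PiE D1 (\<lambda>_. UNIV)" using y by auto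
    qed
    have "?Q ^ n = card (\<Phi> ` PiE {..<n} (\<lambda>_. UNIV))"
      by (simp add: card_image[OF inj] card_PiE)
    also have "\<dots> \<le> card (\<Psi> ` PiE D1 (\<lambda>_. UNIV))"
      by (rule card_mono[OF _ sub]) (use fin finD1 in \<open>auto intro: finite_PiE\<close>)
    also have "\<dots> \<le> card (PiE D1 (\<lambda>_. UNIV :: 'k set))" by (rule card_image_le) (use fin finD1 in \<open>auto intro: finite_PiE\<close>)
    also have "\<dots> = ?Q ^ card D1" by (simp add: card_PiE finD1)
    finally show ?thesis using Q2 by (simp add: power_le_imp_le_exp)
  qed
  have cardS: "card S \<le> n"
  proof -
    have "S \<union> D1 = {..<?N}" "S \<inter> D1 = {}" by (auto simp: S_def D1_def)
    then have "card S + card D1 = ?N" using finS finD1 by (metis card_Un_disjoint card_lessThan)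
    then show ?thesis using cardD1 by simp
  qed
  \<comment> \<open>reduction modulo the x's\<close>
  let ?mu = "msubst (keep {i. n \<le> i}) :: 'k mpoly \<Rightarrow> 'k mpoly"
  define Fb where "Fb i = ?mu (F i)" for i
  have muF: "Fb i = 0" if "i \<in> D1" for i
    unfolding Fb_def Flin[OF that] msubst_sum by (intro sum.neutral) (auto simp: msubst_mult keep_def)
  have mured: "?mu f = msubst Fb (msubst (keep S) P)" if P: "P \<in> polys_in ?N" "f = msubst F P" for f P
  proof -
    have "?mu f = msubst Fb P" unfolding P(2) Fb_def by (rule msubst_comp)
    also have "\<dots> = msubst (\<lambda>i. msubst Fb (keep S i)) P"
    proof (rule msubst_cong[OF P(1)])
      fix i assume i: "i < ?N"
      show "Fb i = msubst Fb (keep S i)"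
      proof (cases "i \<in> S")
        case True then show ?thesis by (simp add: keep_def)
      next
        case False
        then have "i \<in> D1" using i by (auto simp: S_def D1_def)
        then show ?thesis using False by (simp add: keep_def muF)
      qed
    qed
    also have "\<dots> = msubst Fb (msubst (keep S) P)" by (rule msubst_comp[symmetric])
    finally show ?thesis .
  qed
  have z': "of_nat p = (0::'k)" by (rule z)
  have exP: "\<exists>P. P \<in> polys_in ?N \<and> f = msubst F P" if "f \<in> ?I" for f
    using F3[OF that] by blast
  define PN where "PN a = (SOME P. P \<in> polys_in ?N \<and> Na n q a = msubst F P)" for a
  define Ph where "Ph = (SOME P. P \<in> polys_in ?N \<and> hh n q = msubst F P)"
  have PN: "PN a \<in> polys_in ?N \<and> Na n q a = msubst F (PN a)" if "a < n" for a
    unfolding PN_def by (rule someI_ex, rule exP, rule Na_invariant[OF p z q fin that])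
  have Ph: "Ph \<in> polys_in ?N \<and> hh n q = msubst F Ph"
    unfolding Ph_def by (rule someI_ex, rule exP, rule hh_invariant[OF p z q])
  define R where "R a = (if a = n then msubst (keep S) Ph else msubst (keep S) (PN a))" for a
  define M where "M a = card (W n q a :: 'k mpoly set)" for a
  have M1: "M a \<ge> 1" for a
  proof -
    have "(0::'k mpoly) \<in> W n q a" using q2 by (intro W_zero) simp
    then have "W n q a \<noteq> ({} :: 'k mpoly set)" by blast
    then show ?thesis using W_finite[OF fin, of n q a] by (simp add: M_def Suc_le_eq card_gt_0_iff)
  qed
  have RY: "msubst Fb (R a) = mvar (n + a) ^ M a" if a: "a < n" for a
  proof -
    have "?mu (Na n q a) = msubst Fb (msubst (keep S) (PN a))" using PN[OF a] by (intro mured) auto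
    then have "msubst Fb (R a) = ?mu (Na n q a)" using a by (simp add: R_def)
    also have "\<dots> = mvar (n + a) ^ M a" by (simp add: keepY_Na[OF a] M_def)
    finally show ?thesis .
  qed
  have Rh: "msubst Fb (R n) = 0"
  proof -
    have "?mu (hh n q) = msubst Fb (msubst (keep S) Ph)" using Ph by (intro mured) auto
    then have "msubst Fb (R n) = ?mu (hh n q)" by (simp add: R_def)
    also have "\<dots> = 0" by (rule keepY_hh)
    finally show ?thesis .
  qed
  have Rnz: "R n \<noteq> 0"
  proof
    assume "R n = 0"
    then have "msubst (keep S) Ph = 0" by (simp add: R_def)
    then obtain Qs where Qs: "\<And>i. Qs i \<in> polys_in ?N" and Pheq: "Ph = (\<Sum>i\<in>{..<?N} - S. mvar i * Qs i)"
      using ideal_split[of Ph ?N S] Ph by blast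
    have D1eq: "{..<?N} - S = D1" by (auto simp: S_def D1_def)
    define u where "u i = msubst F (Qs i)" for i
    have uinv: "u i \<in> ?I" for i unfolding u_def by (rule inv_msubst[OF Finv Qs])
    have "hh n q = (\<Sum>i\<in>D1. F i * u i)"
      using Ph unfolding Pheq D1eq by (simp add: msubst_sum msubst_mult u_def)
    also have "\<dots> = (\<Sum>i\<in>D1. \<Sum>j<n. mvar j * (mconst (\<Lambda> i j) * u i))"
      by (intro sum.cong refl) (simp add: Flin sum_distrib_right sum_distrib_left mult_ac)
    also have "\<dots> = (\<Sum>j<n. mvar j * (\<Sum>i\<in>D1. mconst (\<Lambda> i j) * u i))"
      by (subst sum.swap) (simp add: sum_distrib_left)
    finally have eqh: "hh n q = (\<Sum>j<n. mvar j * (\<Sum>i\<in>D1. mconst (\<Lambda> i j) * u i))" .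
    show False
      by (rule key_lemma[OF p z q r fin card n _ eqh]) (intro inv_sum inv_mult inv_mconst uinv)
  qed
  define e where "e = 1 + (\<Sum>a<Suc n. \<Sum>m\<in>Poly_Mapping.keys (R a). mdeg m)"
  have Rgood: "R a \<in> good S e" if a: "a < Suc n" for a
    unfolding good_def mem_Collect_eq
  proof
    fix m assume m: "m \<in> Poly_Mapping.keys (R a)"
    have "Poly_Mapping.keys m \<subseteq> S" using m keys_msubst_keep by (auto simp: R_def split: if_splits)
    moreover have "mdeg m \<le> (\<Sum>m\<in>Poly_Mapping.keys (R a). mdeg m)" by (rule member_le_sum) (use m in auto)
    moreover have "(\<Sum>m\<in>Poly_Mapping.keys (R a). mdeg m) \<le> (\<Sum>a<Suc n. \<Sum>m\<in>Poly_Mapping.keys (R a). mdeg m)"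
      by (rule member_le_sum[where f = "\<lambda>a. \<Sum>m\<in>Poly_Mapping.keys (R a). mdeg m"]) (use a in auto)
    ultimately show "Poly_Mapping.keys m \<subseteq> S \<and> mdeg m \<le> e" by (simp add: e_def)
  qed
  have cS: "card S < Suc n" using cardS by simp
  have e1: "e \<ge> 1" by (simp add: e_def)
  obtain T where T: "T \<in> polys_in (Suc n)" "T \<noteq> 0" "msubst R T = 0"
  proof -
    have "\<exists>T\<in>polys_in (Suc n). T \<noteq> 0 \<and> msubst R T = 0"
      by (rule count_dependent[OF fin finS cS _ e1]) (rule Rgood)
    then show ?thesis using that by blast
  qed
  have desc: "\<And>T. T \<in> polys_in (Suc n) \<Longrightarrow> msubst R T = 0 \<Longrightarrow> (\<forall>m\<in>Poly_Mapping.keys T. Poly_Mapping.lookup m n \<le> B) \<Longrightarrow> T = 0" for B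
  proof (induction B)
    have allnz: "\<forall>m\<in>Poly_Mapping.keys T. Poly_Mapping.lookup m n \<noteq> 0"
      if TL: "T \<in> polys_in (Suc n)" and TR: "msubst R T = 0" for T
    proof -
      define \<sigma> where "\<sigma> a = (if a < n then mvar (n + a) ^ M a else 0 :: 'k mpoly)" for a
      have "msubst \<sigma> T = msubst (\<lambda>a. msubst Fb (R a)) T"
      proof (rule msubst_cong[OF TL])
        fix a assume "a < Suc n"
        then show "\<sigma> a = msubst Fb (R a)" using RY Rh by (cases "a < n") (auto simp: \<sigma>_def less_Suc_eq)
      qed
      also have "\<dots> = msubst Fb (msubst R T)" by (rule msubst_comp[symmetric])
      also have "\<dots> = 0" using TR by simp
      finally have "msubst \<sigma> T = 0" .
      then show ?thesis by (intro inj_Y[OF TL, of \<sigma> M]) (use M1 in \<open>auto simp: \<sigma>_def Suc_le_eq\<close>)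
    qed
    case 0
    then show ?case using allnz[OF "0.prems"(1,2)] "0.prems"(3)
      by (metis keys_eq_empty all_not_in_conv le_zero_eq)
  next
    case (Suc B)
    have nz: "\<forall>m\<in>Poly_Mapping.keys T. Poly_Mapping.lookup m n \<noteq> 0"
    proof -
      define \<sigma> where "\<sigma> a = (if a < n then mvar (n + a) ^ M a else 0 :: 'k mpoly)" for a
      have "msubst \<sigma> T = msubst (\<lambda>a. msubst Fb (R a)) T"
      proof (rule msubst_cong[OF Suc.prems(1)])
        fix a assume "a < Suc n"
        then show "\<sigma> a = msubst Fb (R a)" using RY Rh by (cases "a < n") (auto simp: \<sigma>_def less_Suc_eq)
      qed
      also have "\<dots> = msubst Fb (msubst R T)" by (rule msubst_comp[symmetric])
      also have "\<dots> = 0" using Suc.prems(2) by simp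
      finally have "msubst \<sigma> T = 0" .
      then show ?thesis by (intro inj_Y[OF Suc.prems(1), of \<sigma> M]) (use M1 in \<open>auto simp: \<sigma>_def Suc_le_eq\<close>)
    qed
    define T1 where "T1 = (\<Sum>m\<in>Poly_Mapping.keys T. Poly_Mapping.single (m - Poly_Mapping.single n 1) (Poly_Mapping.lookup T m))"
    have Teq: "T = mvar n * T1" unfolding T1_def by (rule div_var(1)[OF nz])
    have kT1: "\<forall>m'\<in>Poly_Mapping.keys T1. \<exists>m\<in>Poly_Mapping.keys T. m' = m - Poly_Mapping.single n 1"
      unfolding T1_def by (rule div_var(2)[OF nz])
    have T1L: "T1 \<in> polys_in (Suc n)" unfolding T1_def by (rule div_var(3)[OF nz Suc.prems(1)])
    have "R n * msubst R T1 = 0" using Suc.prems(2) Teq by (simp add: msubst_mult)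
    then have T1R: "msubst R T1 = 0" using Rnz by simp
    have "\<forall>m\<in>Poly_Mapping.keys T1. Poly_Mapping.lookup m n \<le> B"
    proof
      fix m' assume "m' \<in> Poly_Mapping.keys T1"
      then obtain m where m: "m \<in> Poly_Mapping.keys T" "m' = m - Poly_Mapping.single n 1" using kT1 by blast
      have "Poly_Mapping.lookup m n \<le> Suc B" using Suc.prems(3) m(1) by blast
      then show "Poly_Mapping.lookup m' n \<le> B" using m(2) by (simp add: lookup_minus)
    qed
    then have "T1 = 0" using Suc.IH[OF T1L T1R] by blast
    then show ?case using Teq by simp
  qed
  have "T = 0"
    by (rule desc[OF T(1) T(3), of "\<Sum>m\<in>Poly_Mapping.keys T. Poly_Mapping.lookup m n"])
       (auto intro: member_le_sum)
  then show False using T(2) by simp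
qed


theorem mainTheorem3:
  fixes p r q n :: nat
  assumes "prime p" and "r \<ge> 1" and "q = p ^ r"
    and "card (UNIV :: 'k::field set) = q ^ 2"
    and "n \<ge> 2"
  shows "\<not> coregular (2 * n) (Gn q n :: (nat \<Rightarrow> nat \<Rightarrow> 'k) set)
         \<and> \<not> direct_summand_property (2 * n) (Gn q n :: (nat \<Rightarrow> nat \<Rightarrow> 'k) set)"
proof -
  have q0: "q ^ 2 \<noteq> 0" using assms(1,3) by (simp add: prime_gt_0_nat)
  have fin: "finite (UNIV :: 'k set)" using assms(4) q0 card.infinite by fastforce
  have "of_nat (card (UNIV :: 'k set)) = (0::'k)" by (rule field_card_zero[OF fin])
  then have "(of_nat p :: 'k) ^ (r * 2) = 0" using assms(3,4) by (simp add: power_mult)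
  then have z: "of_nat p = (0::'k)" by simp
  show ?thesis
    using not_coregular[OF assms(1) z assms(3) assms(2) fin assms(4) assms(5)]
          not_dsp[OF assms(1) z assms(3) assms(2) fin assms(4) assms(5)] by blast
qed

end
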